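(* Let $\{X_k(m): m\in\mathbb{R}_+,\ k\in\mathbb{N}\}$ be a family of integrable real random variables that are independent in $k$. Assume: (C) $\mathbb{E}[X_k(m)]=0$ for all $m,k$; (S1) there is $\delta>0$ such that for every $\varepsilon>0$ there is $C=C(\varepsilon)$ with $\sup_k\mathbb{P}(|X_k(m)|>\varepsilon)<C/m^{\delta}$ for all $m$; (S2) there are a random variable $X_*$ and $\gamma>0$ with $\mathbb{E}[|X_*|^{2+\gamma}]<\infty$ and $\sup_{k,m}\mathbb{P}(X_k(m)>x)\le\mathbb{P}(X_*>x)$ for all $x\in\mathbb{R}$; (S3) for every $\varepsilon>0$ there are $\beta>1$ and $C_\varepsilon>0$ such that for all $t,r,m>0$, $\sup_k\mathbb{P}\big(\sup_{s\le m}|(r+s)X_k(r+s)-rX_k(r)|\ge t\varepsilon\big)\le C_\varepsilon m^\beta/t^\beta$. Let $(m_k)_{k\in\mathbb N}$ be any sequence of positive reals with $\sum_k m_k=\infty$, let $M_0=0$, $M_n=\sum_{k=1}^n m_k$, and for $t>0$ let $\ell_t=\inf\{\ell\in\mathbb N: M_\ell\ge t\}$, $\bar t=t-M_{\ell_t-1}$, and $\mathcal S_t=\sum_{k=1}^{\ell_t-1}\frac{m_k}{t}X_k(m_k)+\frac{\bar t}{t}X_{\ell_t}(\bar t)$. Then $\mathbb{P}(\lim_{t\to\infty}\mathcal S_t=0)=1$.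
   Context: $\mathbb{R}_+$ denotes the positive reals. "Independent in $k$" means that the families $\{X_k(m): m\in\mathbb{R}_+\}$ for different $k$ are independent. *)

theory Defs
  imports "HOL-Probability.Probability"
begin

definition Mpart :: "(nat \<Rightarrow> real) \<Rightarrow> nat \<Rightarrow> real" where
  "Mpart ms n = (\<Sum>k=1..n. ms k)"

definition ell :: "(nat \<Rightarrow> real) \<Rightarrow> real \<Rightarrow> nat" where
  "ell ms t = (LEAST l. Mpart ms l \<ge> t)"

definition tbar :: "(nat \<Rightarrow> real) \<Rightarrow> real \<Rightarrow> real" where
  "tbar ms t = t - Mpart ms (ell ms t - 1)"

definition St :: "(nat \<Rightarrow> real \<Rightarrow> 'a \<Rightarrow> real) \<Rightarrow> (nat \<Rightarrow> real) \<Rightarrow> real \<Rightarrow> 'a \<Rightarrow> real" where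
  "St X ms t \<omega> = (\<Sum>k=1..ell ms t - 1. ms k / t * X k (ms k) \<omega>)
      + tbar ms t / t * X (ell ms t) (tbar ms t) \<omega>"

end

theory Submission
  imports Defs
begin

context prob_space begin

lemma dyadic_nn_bound:
  fixes Z g :: "'a \<Rightarrow> real" and a b q :: "nat \<Rightarrow> real"
  assumes [measurable]: "Z \<in> borel_measurable M"
    and a: "\<And>n. a n \<ge> 0"
    and pt: "\<And>\<omega>. \<omega> \<in> space M \<Longrightarrow> ennreal (g \<omega>) \<le> (\<Sum>n. ennreal (a n) * indicator {\<omega>\<in>space M. b n < Z \<omega>} \<omega>)"
    and tl: "\<And>n. prob {\<omega>\<in>space M. b n < Z \<omega>} \<le> q n"
    and sq: "summable (\<lambda>n. a n * q n)"
  shows "(\<integral>\<^sup>+\<omega>. ennreal (g \<omega>) \<partial>M) \<le> ennreal (\<Sum>n. a n * q n)"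
proof -
  have q0: "q n \<ge> 0" for n using tl[of n] measure_nonneg order_trans by blast
  have "(\<integral>\<^sup>+\<omega>. ennreal (g \<omega>) \<partial>M) \<le> (\<integral>\<^sup>+\<omega>. (\<Sum>n. ennreal (a n) * indicator {\<omega>\<in>space M. b n < Z \<omega>} \<omega>) \<partial>M)"
    by (intro nn_integral_mono pt)
  also have "\<dots> = (\<Sum>n. \<integral>\<^sup>+\<omega>. ennreal (a n) * indicator {\<omega>\<in>space M. b n < Z \<omega>} \<omega> \<partial>M)"
    by (intro nn_integral_suminf) measurable
  also have "\<dots> = (\<Sum>n. ennreal (a n) * emeasure M {\<omega>\<in>space M. b n < Z \<omega>})"
    by (intro suminf_cong nn_integral_cmult_indicator) measurable
  also have "\<dots> \<le> (\<Sum>n. ennreal (a n * q n))"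
  proof (intro suminf_le summableI)
    fix n
    have "emeasure M {\<omega>\<in>space M. b n < Z \<omega>} \<le> ennreal (q n)"
      using tl[of n] by (simp add: emeasure_eq_measure ennreal_leI)
    then show "ennreal (a n) * emeasure M {\<omega>\<in>space M. b n < Z \<omega>} \<le> ennreal (a n * q n)"
      using a[of n] q0[of n] by (simp add: ennreal_mult' mult_left_mono)
  qed
  also have "\<dots> = ennreal (\<Sum>n. a n * q n)"
    using a q0 sq by (intro suminf_ennreal2) auto
  finally show ?thesis .
qed

end


lemma dyadic_up:
  fixes y z :: real assumes "y > 0" "y < z"
  shows "\<exists>n. y*2^n < z \<and> z \<le> y*2^(Suc n)"
proof -
  obtain k where k: "z/y < 2^k" using real_arch_pow[of 2 "z/y"] by auto
  then have ex: "\<exists>n. z \<le> y*2^(Suc n)"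
    using assms by (intro exI[of _ k]) (auto simp: field_simps)
  define N where "N = (LEAST n. z \<le> y*2^(Suc n))"
  have N: "z \<le> y*2^(Suc N)" unfolding N_def by (rule LeastI_ex[OF ex])
  show ?thesis
  proof (cases N)
    case 0 then show ?thesis using N assms by (intro exI[of _ 0]) auto
  next
    case (Suc m)
    have "\<not> z \<le> y*2^(Suc m)" using not_less_Least[of m "\<lambda>n. z \<le> y*2^(Suc n)"] Suc
      unfolding N_def by auto
    then show ?thesis using N Suc by (intro exI[of _ N]) auto
  qed
qed

lemma dyadic_down:
  fixes y z :: real assumes "y > 0" "0 < z" "z \<le> y"
  shows "\<exists>n. y/2^(Suc n) < z \<and> z \<le> y/2^n"
proof -
  obtain k where k: "y/z < 2^k" using real_arch_pow[of 2 "y/z"] by auto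
  then have ex: "\<exists>n. y/2^(Suc n) < z"
    using assms by (intro exI[of _ k]) (auto simp: field_simps)
  define N where "N = (LEAST n. y/2^(Suc n) < z)"
  have N: "y/2^(Suc N) < z" unfolding N_def by (rule LeastI_ex[OF ex])
  show ?thesis
  proof (cases N)
    case 0 then show ?thesis using N assms by (intro exI[of _ 0]) auto
  next
    case (Suc m)
    have "\<not> y/2^(Suc m) < z" using not_less_Least[of m "\<lambda>n. y/2^(Suc n) < z"] Suc
      unfolding N_def by auto
    then show ?thesis using N Suc by (intro exI[of _ N]) auto
  qed
qed

lemma ennreal_le_suminf_term:
  fixes f :: "nat \<Rightarrow> ennreal" shows "f n \<le> suminf f"
  using sum_le_suminf[of f "{n}"] by (auto intro: summableI)

lemma geo1:
  fixes y A \<beta> :: real assumes "y > 0" "\<beta> > 1"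
  shows "(\<lambda>n. y*2^(Suc n) * (A * (y*2^n) powr -\<beta>)) sums (2*A*y powr (1-\<beta>) / (1 - 2 powr (1-\<beta>)))"
proof -
  have c: "2 powr (1-\<beta>) < 1" using assms by (simp add: powr_less_one)
  have eq: "y*2^(Suc n) * (A * (y*2^n) powr -\<beta>) = (2*A*y powr (1-\<beta>)) * (2 powr (1-\<beta>))^n" for n
  proof -
    have "(2::real)^n = 2 powr (real n)" by (simp add: powr_realpow)
    then have "((2::real)^n) powr -\<beta> = (2 powr -\<beta>)^n"
      by (simp add: powr_powr powr_power mult.commute)
    then have "(y*2^n) powr -\<beta> = y powr -\<beta> * (2 powr -\<beta>)^n"
      using assms by (simp add: powr_mult)
    moreover have "(2 powr (1-\<beta>))^n = 2^n * (2 powr -\<beta>)^n"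
    proof -
      have "2 powr (1-\<beta>) = 2 * 2 powr (-\<beta>)" using powr_add[of 2 1 "-\<beta>"] by simp
      then show ?thesis by (simp add: power_mult_distrib)
    qed
    moreover have "y powr (1-\<beta>) = y * y powr -\<beta>" using assms by (simp add: powr_diff powr_minus divide_inverse)
    ultimately show ?thesis by (simp add: algebra_simps)
  qed
  show ?thesis unfolding eq
    using sums_mult[OF geometric_sums[of "2 powr (1-\<beta>)"], of "2*A*y powr (1-\<beta>)"] c
    by (simp add: divide_inverse)
qed

lemma four_pow: "((2::real)^n)^2 = 4^n"
proof -
  have "((2::real)^n)^2 = (2^2)^n" by (simp only: power_mult[symmetric] mult.commute)
  then show ?thesis by simp
qed

lemma geo2:
  fixes y A \<beta> :: real assumes "y > 0" "\<beta> < 2"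
  shows "(\<lambda>n. (y/2^n)^2 * (A * (y/2^(Suc n)) powr -\<beta>)) sums (A * 2 powr \<beta> * y powr (2-\<beta>) / (1 - 2 powr (\<beta>-2)))"
proof -
  have c: "2 powr (\<beta>-2) < 1" using assms by (simp add: powr_less_one)
  have eq: "(y/2^n)^2 * (A * (y/2^(Suc n)) powr -\<beta>) = (A * 2 powr \<beta> * y powr (2-\<beta>)) * (2 powr (\<beta>-2))^n" for n
  proof -
    have "(2::real)^(Suc n) = 2 powr (real (Suc n))" by (subst powr_realpow) auto
    then have "((2::real)^(Suc n)) powr \<beta> = 2 powr (\<beta> + real n * \<beta>)"
      by (simp add: powr_powr algebra_simps del: power_Suc)
    also have "\<dots> = (2 powr \<beta>) * (2 powr \<beta>)^n" by (simp add: powr_add powr_power)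
    finally have P: "((2::real)^(Suc n)) powr \<beta> = (2 powr \<beta>) * (2 powr \<beta>)^n" .
    have d: "(y/2^(Suc n)) powr -\<beta> = y powr -\<beta> / (2^(Suc n)) powr -\<beta>" by (rule powr_divide; use assms in auto)
    have e: "((2::real)^(Suc n)) powr -\<beta> = inverse (((2::real)^(Suc n)) powr \<beta>)" by (rule powr_minus)
    have a: "(y/2^(Suc n)) powr -\<beta> = y powr -\<beta> * 2 powr \<beta> * (2 powr \<beta>)^n"
      unfolding d unfolding e unfolding P by (simp add: divide_inverse mult.assoc)
    have b: "(2 powr (\<beta>-2))^n * 4^n = (2 powr \<beta>)^n"
    proof -
      have "2 powr (\<beta>-2) * 2 powr 2 = 2 powr \<beta>" using powr_add[of 2 "\<beta>-2" 2] by simp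
      then have "2 powr (\<beta>-2) * 4 = 2 powr \<beta>" by simp
      then show ?thesis by (metis power_mult_distrib)
    qed
    have cc: "y powr (2-\<beta>) = y^2 * y powr -\<beta>" using assms by (simp add: powr_diff powr_minus divide_inverse)
    have s: "(y/2^n)^2 = y^2 / 4^n" by (simp add: power_divide four_pow)
    have q: "(2 powr (\<beta>-2))^n = (2 powr \<beta>)^n / 4^n" using b by (simp add: field_simps)
    show ?thesis unfolding s q a cc by (simp add: field_simps)
  qed
  show ?thesis unfolding eq
    using sums_mult[OF geometric_sums[of "2 powr (\<beta>-2)"], of "A * 2 powr \<beta> * y powr (2-\<beta>)"] c
    by (simp add: divide_inverse)
qed



context prob_space begin

lemma moment_hi:
  fixes Y :: "'a \<Rightarrow> real" and A \<beta> y :: real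
  assumes [measurable]: "Y \<in> borel_measurable M" and b: "\<beta> > 1" and A: "A \<ge> 0"
    and tail: "\<And>x. x > 0 \<Longrightarrow> prob {\<omega>\<in>space M. x < \<bar>Y \<omega>\<bar>} \<le> A * x powr -\<beta>" and y: "y > 0"
  shows "(\<integral>\<^sup>+\<omega>. ennreal (if y < \<bar>Y \<omega>\<bar> then \<bar>Y \<omega>\<bar> else 0) \<partial>M)
     \<le> ennreal (2*A*y powr (1-\<beta>) / (1 - 2 powr (1-\<beta>)))"
proof -
  note S = geo1[OF y b, of A]
  have "(\<integral>\<^sup>+\<omega>. ennreal (if y < \<bar>Y \<omega>\<bar> then \<bar>Y \<omega>\<bar> else 0) \<partial>M)
     \<le> ennreal (\<Sum>n. y*2^(Suc n) * (A * (y*2^n) powr -\<beta>))"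
  proof (rule dyadic_nn_bound[where Z="\<lambda>\<omega>. \<bar>Y \<omega>\<bar>" and b="\<lambda>n. y*2^n"])
    show "summable (\<lambda>n. y*2^(Suc n) * (A * (y*2^n) powr -\<beta>))" using S by (rule sums_summable)
    show "prob {\<omega> \<in> space M. y*2^n < \<bar>Y \<omega>\<bar>} \<le> A * (y*2^n) powr -\<beta>" for n
      using y by (intro tail) auto
    show "0 \<le> y*2^(Suc n)" for n using y by auto
    fix \<omega> assume \<omega>: "\<omega> \<in> space M"
    show "ennreal (if y < \<bar>Y \<omega>\<bar> then \<bar>Y \<omega>\<bar> else 0)
      \<le> (\<Sum>n. ennreal (y * 2 ^ Suc n) * indicator {\<omega> \<in> space M. y*2^n < \<bar>Y \<omega>\<bar>} \<omega>)"
    proof (cases "y < \<bar>Y \<omega>\<bar>")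
      case True
      then obtain n where n: "y*2^n < \<bar>Y \<omega>\<bar>" "\<bar>Y \<omega>\<bar> \<le> y*2^(Suc n)"
        using dyadic_up[OF y] by blast
      have "ennreal (if y < \<bar>Y \<omega>\<bar> then \<bar>Y \<omega>\<bar> else 0) \<le> ennreal (y * 2 ^ Suc n) * indicator {\<omega> \<in> space M. y*2^n < \<bar>Y \<omega>\<bar>} \<omega>"
        using True n \<omega> by (auto intro: ennreal_leI)
      also have "\<dots> \<le> (\<Sum>n. ennreal (y * 2 ^ Suc n) * indicator {\<omega> \<in> space M. y*2^n < \<bar>Y \<omega>\<bar>} \<omega>)"
        by (rule ennreal_le_suminf_term)
      finally show ?thesis .
    qed simp
  qed measurable
  then show ?thesis using sums_unique[OF S] by simp
qed

lemma moment_lo: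
  fixes Y :: "'a \<Rightarrow> real" and A \<beta> y :: real
  assumes [measurable]: "Y \<in> borel_measurable M" and b: "\<beta> < 2" and A: "A \<ge> 0"
    and tail: "\<And>x. x > 0 \<Longrightarrow> prob {\<omega>\<in>space M. x < \<bar>Y \<omega>\<bar>} \<le> A * x powr -\<beta>" and y: "y > 0"
  shows "(\<integral>\<^sup>+\<omega>. ennreal (if \<bar>Y \<omega>\<bar> \<le> y then (Y \<omega>)^2 else 0) \<partial>M)
     \<le> ennreal (A * 2 powr \<beta> * y powr (2-\<beta>) / (1 - 2 powr (\<beta>-2)))"
proof -
  note S = geo2[OF y b, of A]
  have "(\<integral>\<^sup>+\<omega>. ennreal (if \<bar>Y \<omega>\<bar> \<le> y then (Y \<omega>)^2 else 0) \<partial>M)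
     \<le> ennreal (\<Sum>n. (y/2^n)^2 * (A * (y/2^(Suc n)) powr -\<beta>))"
  proof (rule dyadic_nn_bound[where Z="\<lambda>\<omega>. \<bar>Y \<omega>\<bar>" and b="\<lambda>n. y/2^(Suc n)"])
    show "summable (\<lambda>n. (y/2^n)^2 * (A * (y/2^(Suc n)) powr -\<beta>))" using S by (rule sums_summable)
    show "prob {\<omega> \<in> space M. y/2^(Suc n) < \<bar>Y \<omega>\<bar>} \<le> A * (y/2^(Suc n)) powr -\<beta>" for n
      using y by (intro tail) auto
    show "0 \<le> (y/2^n)^2" for n by auto
    fix \<omega> assume \<omega>: "\<omega> \<in> space M"
    show "ennreal (if \<bar>Y \<omega>\<bar> \<le> y then (Y \<omega>)^2 else 0)
      \<le> (\<Sum>n. ennreal ((y/2^n)^2) * indicator {\<omega> \<in> space M. y/2^(Suc n) < \<bar>Y \<omega>\<bar>} \<omega>)"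
    proof (cases "\<bar>Y \<omega>\<bar> \<le> y \<and> 0 < \<bar>Y \<omega>\<bar>")
      case True
      then obtain n where n: "y/2^(Suc n) < \<bar>Y \<omega>\<bar>" "\<bar>Y \<omega>\<bar> \<le> y/2^n"
        using dyadic_down[OF y] by blast
      have "(Y \<omega>)^2 \<le> (y/2^n)^2"
        using n(2) by (metis abs_ge_zero power2_abs power_mono)
      then have "ennreal (if \<bar>Y \<omega>\<bar> \<le> y then (Y \<omega>)^2 else 0) \<le> ennreal ((y/2^n)^2) * indicator {\<omega> \<in> space M. y/2^(Suc n) < \<bar>Y \<omega>\<bar>} \<omega>"
        using True n \<omega> by (auto intro: ennreal_leI)
      also have "\<dots> \<le> (\<Sum>n. ennreal ((y/2^n)^2) * indicator {\<omega> \<in> space M. y/2^(Suc n) < \<bar>Y \<omega>\<bar>} \<omega>)"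
        by (rule ennreal_le_suminf_term)
      finally show ?thesis .
    qed auto
  qed measurable
  then show ?thesis using sums_unique[OF S] by simp
qed

end


context prob_space begin

lemma real_from_nn_bound:
  fixes f :: "'a \<Rightarrow> real"
  assumes "integrable M f" "\<And>\<omega>. f \<omega> \<ge> 0" "(\<integral>\<^sup>+\<omega>. ennreal (f \<omega>) \<partial>M) \<le> ennreal B" "B \<ge> 0"
  shows "expectation f \<le> B"
proof -
  have "(\<integral>\<^sup>+\<omega>. ennreal (f \<omega>) \<partial>M) = ennreal (expectation f)"
    using assms by (intro nn_integral_eq_integral) auto
  then show ?thesis using assms ennreal_le_iff by auto
qed

lemma trunc_hi_bound:
  fixes Y :: "'a \<Rightarrow> real" and A \<beta> c T :: real
  assumes [measurable]: "Y \<in> borel_measurable M" and intY: "integrable M Y" and b: "\<beta> > 1" and A: "A \<ge> 0"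
    and tail: "\<And>x. x > 0 \<Longrightarrow> prob {\<omega>\<in>space M. x < \<bar>Y \<omega>\<bar>} \<le> A * x powr -\<beta>"
    and c: "c > 0" and T: "T > 0"
  shows "expectation (\<lambda>\<omega>. if T < \<bar>c * Y \<omega>\<bar> then \<bar>c * Y \<omega>\<bar> else 0)
      \<le> 2*A/(1 - 2 powr (1-\<beta>)) * T * (c/T) powr \<beta>"
proof -
  have c1: "2 powr (1-\<beta>) < 1" using b by (simp add: powr_less_one)
  have eq: "(\<lambda>\<omega>. ennreal (if T < \<bar>c * Y \<omega>\<bar> then \<bar>c * Y \<omega>\<bar> else 0)) =
      (\<lambda>\<omega>. ennreal c * ennreal (if T/c < \<bar>Y \<omega>\<bar> then \<bar>Y \<omega>\<bar> else 0))"
    using c by (auto simp: abs_mult field_simps ennreal_mult'[symmetric])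
  have "(\<integral>\<^sup>+\<omega>. ennreal (if T < \<bar>c * Y \<omega>\<bar> then \<bar>c * Y \<omega>\<bar> else 0) \<partial>M)
      = ennreal c * (\<integral>\<^sup>+\<omega>. ennreal (if T/c < \<bar>Y \<omega>\<bar> then \<bar>Y \<omega>\<bar> else 0) \<partial>M)"
    unfolding eq by (intro nn_integral_cmult) measurable
  also have "\<dots> \<le> ennreal c * ennreal (2*A*(T/c) powr (1-\<beta>) / (1 - 2 powr (1-\<beta>)))"
    using c T by (intro mult_left_mono moment_hi[OF _ b A tail]) auto
  also have "\<dots> = ennreal (2*A/(1 - 2 powr (1-\<beta>)) * T * (c/T) powr \<beta>)"
  proof -
    have "c * (T/c) powr (1-\<beta>) = T * (c/T) powr \<beta>"
      using c T by (simp add: powr_diff powr_divide field_simps)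
    then have "c * (2*A*(T/c) powr (1-\<beta>) / (1 - 2 powr (1-\<beta>))) = 2*A/(1 - 2 powr (1-\<beta>)) * T * (c/T) powr \<beta>"
      by (simp add: field_simps)
    moreover have "ennreal c * ennreal (2*A*(T/c) powr (1-\<beta>) / (1 - 2 powr (1-\<beta>))) = ennreal (c * (2*A*(T/c) powr (1-\<beta>) / (1 - 2 powr (1-\<beta>))))"
      using c by (intro ennreal_mult'[symmetric]) simp
    ultimately show ?thesis by metis
  qed
  finally show ?thesis
    using c c1 A T
    by (intro real_from_nn_bound) (auto intro!: Bochner_Integration.integrable_bound[OF integrable_mult_right[OF integrable_abs[OF intY]], of _ c] simp: abs_mult)
qed

lemma trunc_lo_bound:
  fixes Y :: "'a \<Rightarrow> real" and A \<beta> c T :: real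
  assumes [measurable]: "Y \<in> borel_measurable M" and b: "\<beta> < 2" and A: "A \<ge> 0"
    and tail: "\<And>x. x > 0 \<Longrightarrow> prob {\<omega>\<in>space M. x < \<bar>Y \<omega>\<bar>} \<le> A * x powr -\<beta>"
    and c: "c > 0" and T: "T > 0"
  shows "expectation (\<lambda>\<omega>. if \<bar>c * Y \<omega>\<bar> \<le> T then (c * Y \<omega>)^2 else 0)
      \<le> A * 2 powr \<beta>/(1 - 2 powr (\<beta>-2)) * T^2 * (c/T) powr \<beta>"
proof -
  have c1: "2 powr (\<beta>-2) < 1" using b by (simp add: powr_less_one)
  have sq: "\<And>\<omega>. \<bar>c * Y \<omega>\<bar> \<le> T \<Longrightarrow> (c*Y \<omega>)^2 \<le> T^2"
    by (metis abs_ge_zero power2_abs power_mono)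
  have eq: "(\<lambda>\<omega>. ennreal (if \<bar>c * Y \<omega>\<bar> \<le> T then (c * Y \<omega>)^2 else 0)) =
      (\<lambda>\<omega>. ennreal (c^2) * ennreal (if \<bar>Y \<omega>\<bar> \<le> T/c then (Y \<omega>)^2 else 0))"
    using c by (auto simp: abs_mult field_simps ennreal_mult'[symmetric] power_mult_distrib)
  have "(\<integral>\<^sup>+\<omega>. ennreal (if \<bar>c * Y \<omega>\<bar> \<le> T then (c * Y \<omega>)^2 else 0) \<partial>M)
      = ennreal (c^2) * (\<integral>\<^sup>+\<omega>. ennreal (if \<bar>Y \<omega>\<bar> \<le> T/c then (Y \<omega>)^2 else 0) \<partial>M)"
    unfolding eq by (intro nn_integral_cmult) measurable
  also have "\<dots> \<le> ennreal (c^2) * ennreal (A * 2 powr \<beta> * (T/c) powr (2-\<beta>) / (1 - 2 powr (\<beta>-2)))"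
    using c T by (intro mult_left_mono moment_lo[OF _ b A tail]) auto
  also have "\<dots> = ennreal (A * 2 powr \<beta>/(1 - 2 powr (\<beta>-2)) * T^2 * (c/T) powr \<beta>)"
  proof -
    have "c^2 * (T/c) powr (2-\<beta>) = T^2 * (c/T) powr \<beta>"
      using c T by (simp add: powr_diff powr_divide field_simps power2_eq_square)
    then have "c^2 * (A * 2 powr \<beta> * (T/c) powr (2-\<beta>) / (1 - 2 powr (\<beta>-2))) = A * 2 powr \<beta>/(1 - 2 powr (\<beta>-2)) * T^2 * (c/T) powr \<beta>"
      by (simp add: field_simps)
    moreover have "ennreal (c^2) * ennreal (A * 2 powr \<beta> * (T/c) powr (2-\<beta>) / (1 - 2 powr (\<beta>-2))) = ennreal (c^2 * (A * 2 powr \<beta> * (T/c) powr (2-\<beta>) / (1 - 2 powr (\<beta>-2))))"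
      using c by (intro ennreal_mult'[symmetric]) simp
    ultimately show ?thesis by metis
  qed
  finally show ?thesis
    using c c1 A T sq
    by (intro real_from_nn_bound) (auto intro!: integrable_const_bound[where B="T^2"])
qed

end


context prob_space begin

lemma sum_trunc:
  fixes Y :: "nat \<Rightarrow> 'a \<Rightarrow> real" and c :: "nat \<Rightarrow> real" and K :: "nat set" and A \<beta> T \<epsilon> :: real
  assumes fin: "finite K"
   and ind: "indep_vars (\<lambda>_. borel) Y K"
   and meas[measurable]: "\<And>k. Y k \<in> borel_measurable M"
   and int: "\<And>k. integrable M (Y k)"
   and cpos: "\<And>k. k\<in>K \<Longrightarrow> c k > 0"
   and T: "T>0" and eps: "\<epsilon>>0" and b1: "1<\<beta>" and b2: "\<beta><2" and A: "A\<ge>0"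
   and tail: "\<And>k x. k\<in>K \<Longrightarrow> x>0 \<Longrightarrow> prob {\<omega>\<in>space M. x < \<bar>Y k \<omega>\<bar>} \<le> A * x powr -\<beta>"
  shows "prob {\<omega>\<in>space M. \<epsilon>*T + 2*A/(1 - 2 powr (1-\<beta>)) * T * (\<Sum>k\<in>K. (c k/T) powr \<beta>)
              \<le> \<bar>\<Sum>k\<in>K. c k * (Y k \<omega> - expectation (Y k))\<bar>}
     \<le> (A + A * 2 powr \<beta>/(1 - 2 powr (\<beta>-2)) / \<epsilon>^2) * (\<Sum>k\<in>K. (c k/T) powr \<beta>)"
proof -
  define A1 where "A1 = 2*A/(1 - 2 powr (1-\<beta>))"
  define A2 where "A2 = A * 2 powr \<beta>/(1 - 2 powr (\<beta>-2))"
  define \<rho> where "\<rho> = (\<Sum>k\<in>K. (c k/T) powr \<beta>)"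
  define V1 where "V1 k \<omega> = (if \<bar>c k * Y k \<omega>\<bar> \<le> T then c k * Y k \<omega> else 0)" for k \<omega>
  define V2 where "V2 k \<omega> = (if T < \<bar>c k * Y k \<omega>\<bar> then c k * Y k \<omega> else 0)" for k \<omega>
  define e1 where "e1 k = expectation (V1 k)" for k
  define W where "W k \<omega> = V1 k \<omega> - e1 k" for k \<omega>
  have mV1[measurable]: "V1 k \<in> borel_measurable M" for k unfolding V1_def by measurable
  have mV2[measurable]: "V2 k \<in> borel_measurable M" for k unfolding V2_def by measurable
  have mW[measurable]: "W k \<in> borel_measurable M" for k unfolding W_def by measurable
  have bV1: "\<bar>V1 k \<omega>\<bar> \<le> T" for k \<omega> using T unfolding V1_def by auto
  have iV1: "integrable M (V1 k)" for k
    using bV1 by (intro integrable_const_bound[where B=T]) auto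
  have be1: "\<bar>e1 k\<bar> \<le> T" for k
  proof -
    have "\<bar>e1 k\<bar> \<le> expectation (\<lambda>\<omega>. \<bar>V1 k \<omega>\<bar>)" unfolding e1_def by (rule integral_abs_bound)
    also have "\<dots> \<le> expectation (\<lambda>_. T)" using bV1 iV1 by (intro integral_mono) auto
    finally show ?thesis by (simp add: prob_space)
  qed
  have bW: "\<bar>W k \<omega>\<bar> \<le> 2*T" for k \<omega>
    using bV1[of k \<omega>] be1[of k] unfolding W_def by auto
  have iW: "integrable M (W k)" for k
    using bW by (intro integrable_const_bound[where B="2*T"]) auto
  have iWW: "integrable M (\<lambda>\<omega>. W i \<omega> * W j \<omega>)" for i j
  proof -
    have "\<bar>W i \<omega>\<bar> * \<bar>W j \<omega>\<bar> \<le> (2*T)*(2*T)" for \<omega>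
      using bW T by (intro mult_mono) auto
    then show ?thesis by (intro integrable_const_bound[where B="(2*T)*(2*T)"]) (auto simp: abs_mult)
  qed
  have iV2: "integrable M (V2 k)" for k
    by (rule Bochner_Integration.integrable_bound[OF integrable_mult_right[OF int[of k]], of _ "c k"])
       (auto simp: V2_def)
  have EW: "expectation (W k) = 0" for k
    unfolding W_def e1_def using iV1 by (simp add: prob_space)
  have indW: "indep_vars (\<lambda>_. borel) W K"
  proof -
    have "indep_vars (\<lambda>_. borel) (\<lambda>k \<omega>. (\<lambda>y. (if \<bar>c k * y\<bar> \<le> T then c k * y else 0) - e1 k) (Y k \<omega>)) K"
      by (rule indep_vars_compose2[OF ind]) measurable
    then show ?thesis unfolding W_def V1_def by simp
  qed
  have cross: "expectation (\<lambda>\<omega>. W i \<omega> * W j \<omega>) = 0" if "i \<in> K" "j \<in> K" "i \<noteq> j" for i j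
  proof -
    have ij: "indep_vars (\<lambda>_. borel) W {i,j}"
      by (rule indep_vars_subset[OF indW]) (use that in auto)
    have "expectation (\<lambda>\<omega>. \<Prod>l\<in>{i,j}. W l \<omega>) = (\<Prod>l\<in>{i,j}. expectation (W l))"
      by (rule indep_vars_lebesgue_integral[OF _ ij]) (auto intro: iW)
    then show ?thesis using that EW by simp
  qed
  have EV1sq: "expectation (\<lambda>\<omega>. (V1 k \<omega>)^2) \<le> A2 * T^2 * (c k/T) powr \<beta>" if "k \<in> K" for k
  proof -
    have "(\<lambda>\<omega>. (V1 k \<omega>)^2) = (\<lambda>\<omega>. if \<bar>c k * Y k \<omega>\<bar> \<le> T then (c k * Y k \<omega>)^2 else 0)"
      unfolding V1_def by auto
    then show ?thesis unfolding A2_def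
      using trunc_lo_bound[OF meas b2 A tail[OF that] cpos[OF that] T] by simp
  qed
  have EWsq: "expectation (\<lambda>\<omega>. (W k \<omega>)^2) \<le> A2 * T^2 * (c k/T) powr \<beta>" if "k \<in> K" for k
  proof -
    have "expectation (\<lambda>\<omega>. (W k \<omega>)^2) = expectation (\<lambda>\<omega>. (V1 k \<omega>)^2 - 2 * e1 k * V1 k \<omega> + (e1 k)^2)"
      unfolding W_def by (rule arg_cong[where f=expectation]) (auto simp: power2_diff algebra_simps)
    also have "\<dots> = expectation (\<lambda>\<omega>. (V1 k \<omega>)^2) - (e1 k)^2"
    proof -
      have iV1sq: "integrable M (\<lambda>\<omega>. (V1 k \<omega>)^2)"
        using bV1 T by (intro integrable_const_bound[where B="T^2"]) (auto simp: abs_le_square_iff[symmetric])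
      show ?thesis using iV1sq iV1 unfolding e1_def
        by (simp add: prob_space power2_eq_square)
    qed
    also have "\<dots> \<le> expectation (\<lambda>\<omega>. (V1 k \<omega>)^2)" by simp
    finally show ?thesis using EV1sq[OF that] by linarith
  qed
  have second: "expectation (\<lambda>\<omega>. (\<Sum>k\<in>K. W k \<omega>)^2) \<le> A2 * T^2 * \<rho>"
  proof -
    have "expectation (\<lambda>\<omega>. (\<Sum>k\<in>K. W k \<omega>)^2) = expectation (\<lambda>\<omega>. \<Sum>i\<in>K. \<Sum>j\<in>K. W i \<omega> * W j \<omega>)"
      by (simp add: power2_eq_square sum_product)
    also have "\<dots> = (\<Sum>i\<in>K. \<Sum>j\<in>K. expectation (\<lambda>\<omega>. W i \<omega> * W j \<omega>))"
      using iWW by (simp add: integral_sum integrable_sum)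
    also have "\<dots> = (\<Sum>i\<in>K. expectation (\<lambda>\<omega>. (W i \<omega>)^2))"
    proof (intro sum.cong refl)
      fix i assume i: "i \<in> K"
      have "(\<Sum>j\<in>K. expectation (\<lambda>\<omega>. W i \<omega> * W j \<omega>)) =
          expectation (\<lambda>\<omega>. W i \<omega> * W i \<omega>) + (\<Sum>j\<in>K-{i}. expectation (\<lambda>\<omega>. W i \<omega> * W j \<omega>))"
        using i fin by (simp add: sum.remove)
      also have "(\<Sum>j\<in>K-{i}. expectation (\<lambda>\<omega>. W i \<omega> * W j \<omega>)) = 0"
        using i cross by (intro sum.neutral) auto
      finally show "(\<Sum>j\<in>K. expectation (\<lambda>\<omega>. W i \<omega> * W j \<omega>)) = expectation (\<lambda>\<omega>. (W i \<omega>)^2)"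
        by (simp add: power2_eq_square)
    qed
    also have "\<dots> \<le> (\<Sum>i\<in>K. A2 * T^2 * (c i/T) powr \<beta>)"
      by (intro sum_mono EWsq)
    also have "\<dots> = A2 * T^2 * \<rho>" unfolding \<rho>_def by (simp add: sum_distrib_left)
    finally show ?thesis .
  qed
  have markov: "prob {\<omega>\<in>space M. (\<epsilon>*T)^2 \<le> (\<Sum>k\<in>K. W k \<omega>)^2} \<le> A2 * \<rho> / \<epsilon>^2"
  proof -
    have iS: "integrable M (\<lambda>\<omega>. (\<Sum>k\<in>K. W k \<omega>)^2)"
      by (simp add: power2_eq_square sum_product iWW)
    have "prob {\<omega>\<in>space M. (\<epsilon>*T)^2 \<le> (\<Sum>k\<in>K. W k \<omega>)^2} \<le> expectation (\<lambda>\<omega>. (\<Sum>k\<in>K. W k \<omega>)^2) / (\<epsilon>*T)^2"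
      using eps T by (intro integral_Markov_inequality_measure[OF iS, of "space M"]) auto
    also have "\<dots> \<le> A2 * T^2 * \<rho> / (\<epsilon>*T)^2"
      using second eps T by (intro divide_right_mono) auto
    also have "\<dots> = A2 * \<rho> / \<epsilon>^2" using T by (simp add: power_mult_distrib)
    finally show ?thesis .
  qed
  have union: "prob (\<Union>k\<in>K. {\<omega>\<in>space M. T < \<bar>c k * Y k \<omega>\<bar>}) \<le> A * \<rho>"
  proof -
    have "prob (\<Union>k\<in>K. {\<omega>\<in>space M. T < \<bar>c k * Y k \<omega>\<bar>}) \<le> (\<Sum>k\<in>K. prob {\<omega>\<in>space M. T < \<bar>c k * Y k \<omega>\<bar>})"
      using fin by (intro finite_measure_subadditive_finite) auto
    also have "\<dots> \<le> (\<Sum>k\<in>K. A * (c k/T) powr \<beta>)"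
    proof (intro sum_mono)
      fix k assume k: "k \<in> K"
      have "{\<omega>\<in>space M. T < \<bar>c k * Y k \<omega>\<bar>} = {\<omega>\<in>space M. T / c k < \<bar>Y k \<omega>\<bar>}"
        using cpos[OF k] by (auto simp: abs_mult field_simps)
      moreover have "prob {\<omega>\<in>space M. T / c k < \<bar>Y k \<omega>\<bar>} \<le> A * (T / c k) powr -\<beta>"
        using cpos[OF k] T by (intro tail k) auto
      moreover have "(T / c k) powr -\<beta> = (c k/T) powr \<beta>"
        using cpos[OF k] T by (simp add: powr_minus powr_divide)
      ultimately show "prob {\<omega>\<in>space M. T < \<bar>c k * Y k \<omega>\<bar>} \<le> A * (c k/T) powr \<beta>" by simp
    qed
    also have "\<dots> = A * \<rho>" unfolding \<rho>_def by (simp add: sum_distrib_left)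
    finally show ?thesis .
  qed
  have EV2: "\<bar>expectation (V2 k)\<bar> \<le> A1 * T * (c k/T) powr \<beta>" if k: "k \<in> K" for k
  proof -
    have "\<bar>expectation (V2 k)\<bar> \<le> expectation (\<lambda>\<omega>. \<bar>V2 k \<omega>\<bar>)" by (rule integral_abs_bound)
    also have "(\<lambda>\<omega>. \<bar>V2 k \<omega>\<bar>) = (\<lambda>\<omega>. if T < \<bar>c k * Y k \<omega>\<bar> then \<bar>c k * Y k \<omega>\<bar> else 0)"
      unfolding V2_def by auto
    also have "expectation \<dots> \<le> A1 * T * (c k/T) powr \<beta>"
      unfolding A1_def by (rule trunc_hi_bound[OF meas int b1 A tail[OF k] cpos[OF k] T])
    finally show ?thesis .
  qed
  have incl: "{\<omega>\<in>space M. \<epsilon>*T + A1 * T * \<rho> \<le> \<bar>\<Sum>k\<in>K. c k * (Y k \<omega> - expectation (Y k))\<bar>}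
     \<subseteq> {\<omega>\<in>space M. (\<epsilon>*T)^2 \<le> (\<Sum>k\<in>K. W k \<omega>)^2} \<union> (\<Union>k\<in>K. {\<omega>\<in>space M. T < \<bar>c k * Y k \<omega>\<bar>})"
  proof (intro subsetI)
    fix \<omega> assume \<omega>: "\<omega> \<in> {\<omega>\<in>space M. \<epsilon>*T + A1 * T * \<rho> \<le> \<bar>\<Sum>k\<in>K. c k * (Y k \<omega> - expectation (Y k))\<bar>}"
    show "\<omega> \<in> {\<omega>\<in>space M. (\<epsilon>*T)^2 \<le> (\<Sum>k\<in>K. W k \<omega>)^2} \<union> (\<Union>k\<in>K. {\<omega>\<in>space M. T < \<bar>c k * Y k \<omega>\<bar>})"
    proof (cases "\<exists>k\<in>K. T < \<bar>c k * Y k \<omega>\<bar>")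
      case True then show ?thesis using \<omega> by auto
    next
      case False
      have split: "c k * (Y k \<omega> - expectation (Y k)) = W k \<omega> - expectation (V2 k)" if k: "k \<in> K" for k
      proof -
        have "c k * Y k \<omega> = V1 k \<omega>" using False k unfolding V1_def by auto
        moreover have "c k * expectation (Y k) = e1 k + expectation (V2 k)"
        proof -
          have "(\<lambda>\<omega>. c k * Y k \<omega>) = (\<lambda>\<omega>. V1 k \<omega> + V2 k \<omega>)" unfolding V1_def V2_def by auto
          then have "expectation (\<lambda>\<omega>. c k * Y k \<omega>) = expectation (\<lambda>\<omega>. V1 k \<omega> + V2 k \<omega>)" by simp
          then show ?thesis using iV1 iV2 unfolding e1_def by simp
        qed
        ultimately show ?thesis unfolding W_def by (simp add: algebra_simps)
      qed
      have "(\<Sum>k\<in>K. c k * (Y k \<omega> - expectation (Y k))) = (\<Sum>k\<in>K. W k \<omega>) - (\<Sum>k\<in>K. expectation (V2 k))"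
        using split by (simp add: sum_subtractf)
      moreover have "\<bar>\<Sum>k\<in>K. expectation (V2 k)\<bar> \<le> A1 * T * \<rho>"
      proof -
        have "\<bar>\<Sum>k\<in>K. expectation (V2 k)\<bar> \<le> (\<Sum>k\<in>K. \<bar>expectation (V2 k)\<bar>)" by (rule sum_abs)
        also have "\<dots> \<le> (\<Sum>k\<in>K. A1 * T * (c k/T) powr \<beta>)" by (intro sum_mono EV2)
        also have "\<dots> = A1 * T * \<rho>" unfolding \<rho>_def by (simp add: sum_distrib_left)
        finally show ?thesis .
      qed
      ultimately have "\<epsilon>*T \<le> \<bar>\<Sum>k\<in>K. W k \<omega>\<bar>" using \<omega> by auto
      then have "(\<epsilon>*T)^2 \<le> (\<Sum>k\<in>K. W k \<omega>)^2"
        using eps T by (metis abs_of_pos abs_le_square_iff mult_pos_pos)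
      then show ?thesis using \<omega> by auto
    qed
  qed
  have "prob {\<omega>\<in>space M. \<epsilon>*T + A1 * T * \<rho> \<le> \<bar>\<Sum>k\<in>K. c k * (Y k \<omega> - expectation (Y k))\<bar>}
     \<le> prob ({\<omega>\<in>space M. (\<epsilon>*T)^2 \<le> (\<Sum>k\<in>K. W k \<omega>)^2} \<union> (\<Union>k\<in>K. {\<omega>\<in>space M. T < \<bar>c k * Y k \<omega>\<bar>}))"
    using fin by (intro finite_measure_mono[OF incl]) auto
  also have "\<dots> \<le> prob {\<omega>\<in>space M. (\<epsilon>*T)^2 \<le> (\<Sum>k\<in>K. W k \<omega>)^2} + prob (\<Union>k\<in>K. {\<omega>\<in>space M. T < \<bar>c k * Y k \<omega>\<bar>})"
    using fin by (intro measure_Un_le) auto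
  also have "\<dots> \<le> A2 * \<rho> / \<epsilon>^2 + A * \<rho>" using markov union by linarith
  also have "\<dots> = (A + A2 / \<epsilon>^2) * \<rho>" by (simp add: field_simps)
  finally show ?thesis unfolding A1_def A2_def \<rho>_def .
qed

end


definition Dsup :: "(nat \<Rightarrow> real \<Rightarrow> 'a \<Rightarrow> real) \<Rightarrow> nat \<Rightarrow> real \<Rightarrow> real \<Rightarrow> 'a \<Rightarrow> ereal" where
  "Dsup X k r m \<omega> = (SUP s\<in>{0..m}. ereal \<bar>(r+s) * X k (r+s) \<omega> - r * X k r \<omega>\<bar>)"

lemma Dsup_ge:
  assumes "0 \<le> s" "s \<le> m"
  shows "ereal \<bar>(r+s) * X k (r+s) \<omega> - r * X k r \<omega>\<bar> \<le> Dsup X k r m \<omega>"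
  unfolding Dsup_def using assms by (intro SUP_upper) auto

locale slln = prob_space M for M :: "'a measure" +
  fixes X :: "nat \<Rightarrow> real \<Rightarrow> 'a \<Rightarrow> real" and ms :: "nat \<Rightarrow> real" and \<beta> C3 \<delta> K0 :: real
  assumes integ: "\<And>k m. m > 0 \<Longrightarrow> integrable M (X k m)"
  and indep: "indep_vars (\<lambda>_. Pi\<^sub>M {0<..} (\<lambda>_. borel)) (\<lambda>k \<omega>. restrict (\<lambda>m. X k m \<omega>) {0<..}) UNIV"
  and mean0: "\<And>k m. m > 0 \<Longrightarrow> expectation (X k m) = 0"
  and delta: "\<delta> > 0"
  and S1: "\<And>\<epsilon>. \<epsilon> > 0 \<Longrightarrow> \<exists>Cc. \<forall>k m. m > 0 \<longrightarrow> prob {\<omega>\<in>space M. \<epsilon> < \<bar>X k m \<omega>\<bar>} \<le> Cc * m powr -\<delta>"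
  and beta: "1 < \<beta>" "\<beta> < 2" and C3: "C3 > 0"
  and Dmeas: "\<And>k r m c. r>0 \<Longrightarrow> m>0 \<Longrightarrow> {\<omega>\<in>space M. ereal c \<le> Dsup X k r m \<omega>} \<in> sets M"
  and S3: "\<And>k r m t. r>0 \<Longrightarrow> m>0 \<Longrightarrow> t>0 \<Longrightarrow> prob {\<omega>\<in>space M. ereal t \<le> Dsup X k r m \<omega>} \<le> C3 * (m/t) powr \<beta>"
  and K0: "\<And>k m. m>0 \<Longrightarrow> expectation (\<lambda>\<omega>. \<bar>X k m \<omega>\<bar>) \<le> K0"
  and mpos: "\<And>k. k \<ge> 1 \<Longrightarrow> ms k > 0"
  and mdiv: "filterlim (Mpart ms) at_top sequentially"
begin

lemma Xmeas[measurable]: "m > 0 \<Longrightarrow> X k m \<in> borel_measurable M"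
  using integ by auto

lemma K0_nonneg: "K0 \<ge> 0"
proof -
  have e0: "0 \<le> expectation (\<lambda>\<omega>. \<bar>X 0 1 \<omega>\<bar>)" by (rule integral_nonneg_AE) auto
  show ?thesis using order_trans[OF e0 K0[where k=0 and m=1]] by simp
qed

lemma markovX:
  assumes "r > 0" "y > 0"
  shows "prob {\<omega>\<in>space M. y < \<bar>X k r \<omega>\<bar>} \<le> K0 / y"
proof -
  have "prob {\<omega>\<in>space M. y < \<bar>X k r \<omega>\<bar>} \<le> prob {\<omega>\<in>space M. y \<le> \<bar>X k r \<omega>\<bar>}"
    using assms by (intro finite_measure_mono) auto
  also have "\<dots> \<le> expectation (\<lambda>\<omega>. \<bar>X k r \<omega>\<bar>) / y"
    using assms integ[OF assms(1)] by (intro integral_Markov_inequality_measure[of _ _ "space M"]) auto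
  also have "\<dots> \<le> K0 / y" using K0[OF assms(1)] assms by (intro divide_right_mono) auto
  finally show ?thesis .
qed

lemma markovf:
  assumes "r > 0" "y > 0"
  shows "prob {\<omega>\<in>space M. y < \<bar>r * X k r \<omega>\<bar>} \<le> K0 * r / y"
proof -
  have "{\<omega>\<in>space M. y < \<bar>r * X k r \<omega>\<bar>} = {\<omega>\<in>space M. y / r < \<bar>X k r \<omega>\<bar>}"
    using assms by (auto simp: abs_mult field_simps)
  then show ?thesis using markovX[of r "y/r" k] assms by simp
qed

lemma tailX:
  assumes c: "c > 0" and x: "x > 0"
  shows "prob {\<omega>\<in>space M. x < \<bar>X k c \<omega>\<bar>} \<le> (C3 * 2 powr \<beta>) * x powr -\<beta>"
proof -
  define B where "B = (C3 * 2 powr \<beta>) * x powr -\<beta>"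
  define r where "r n = c / (2 + real n)" for n :: nat
  have r: "0 < r n" "r n < c" for n
  proof -
    have "0 < c * (real n + 1)" using c by auto
    then show "0 < r n" "r n < c" using c unfolding r_def by (auto simp: field_simps)
  qed
  have bound: "prob {\<omega>\<in>space M. x < \<bar>X k c \<omega>\<bar>} \<le> K0 * r n / (x*c/2) + B" for n
  proof -
    let ?A1 = "{\<omega>\<in>space M. x*c/2 < \<bar>r n * X k (r n) \<omega>\<bar>}"
    let ?A2 = "{\<omega>\<in>space M. ereal (x*c/2) \<le> Dsup X k (r n) (c - r n) \<omega>}"
    have sub: "{\<omega>\<in>space M. x < \<bar>X k c \<omega>\<bar>} \<subseteq> ?A1 \<union> ?A2"
    proof
      fix \<omega> assume \<omega>: "\<omega> \<in> {\<omega>\<in>space M. x < \<bar>X k c \<omega>\<bar>}"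
      have "ereal \<bar>(r n + (c - r n)) * X k (r n + (c - r n)) \<omega> - r n * X k (r n) \<omega>\<bar> \<le> Dsup X k (r n) (c - r n) \<omega>"
        using r[of n] by (intro Dsup_ge) auto
      then have D: "ereal \<bar>c * X k c \<omega> - r n * X k (r n) \<omega>\<bar> \<le> Dsup X k (r n) (c - r n) \<omega>" by simp
      have "x * c < \<bar>c * X k c \<omega>\<bar>" using \<omega> c by (auto simp: abs_mult)
      then have "x*c/2 < \<bar>r n * X k (r n) \<omega>\<bar> \<or> x*c/2 \<le> \<bar>c * X k c \<omega> - r n * X k (r n) \<omega>\<bar>" by linarith
      moreover have "x*c/2 \<le> \<bar>c * X k c \<omega> - r n * X k (r n) \<omega>\<bar> \<Longrightarrow> ereal (x*c/2) \<le> Dsup X k (r n) (c - r n) \<omega>"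
        by (rule order_trans[OF _ D]) simp
      ultimately show "\<omega> \<in> ?A1 \<union> ?A2" using \<omega> by auto
    qed
    have "prob {\<omega>\<in>space M. x < \<bar>X k c \<omega>\<bar>} \<le> prob (?A1 \<union> ?A2)"
      using r[of n] c x by (intro finite_measure_mono[OF sub] sets.Un Dmeas) auto
    also have "\<dots> \<le> prob ?A1 + prob ?A2"
      using r[of n] c x by (intro measure_Un_le Dmeas) auto
    also have "prob ?A1 \<le> K0 * r n / (x*c/2)" using r[of n] c x by (intro markovf) auto
    also have "prob ?A2 \<le> C3 * ((c - r n)/(x*c/2)) powr \<beta>"
      using r[of n] c x by (intro S3) auto
    also have "\<dots> \<le> C3 * (2/x) powr \<beta>"
      using r[of n] c x C3 beta by (intro mult_left_mono powr_mono2) (auto simp: field_simps)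
    also have "C3 * (2/x) powr \<beta> = B"
      unfolding B_def by (subst powr_divide) (use x in \<open>auto simp: powr_minus divide_inverse\<close>)
    finally show ?thesis by simp
  qed
  have lim: "(\<lambda>n. K0 * r n / (x*c/2) + B) \<longlonglongrightarrow> 0 + B"
  proof (intro tendsto_add tendsto_const)
    have "(\<lambda>n. c / (2 + real n)) \<longlonglongrightarrow> 0"
      by (intro real_tendsto_divide_at_top[OF tendsto_const] filterlim_tendsto_add_at_top[OF tendsto_const filterlim_real_sequentially])
    then have "(\<lambda>n. K0 * r n / (x*c/2)) \<longlonglongrightarrow> K0 * 0 / (x*c/2)"
      unfolding r_def by (intro tendsto_divide tendsto_mult tendsto_const) (use x c in auto)
    then show "(\<lambda>n. K0 * r n / (x*c/2)) \<longlonglongrightarrow> 0" by simp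
  qed
  show ?thesis using LIMSEQ_le_const[OF lim] bound unfolding B_def by auto
qed

end


context slln begin

definition NZA :: "nat \<Rightarrow> real \<Rightarrow> real \<Rightarrow> nat \<Rightarrow> 'a set" where
  "NZA k len y n = {\<omega>\<in>space M. y/2 < \<bar>len/(real n+2) * X k (len/(real n+2)) \<omega>\<bar>}
      \<union> {\<omega>\<in>space M. ereal (y/2) \<le> Dsup X k (len/(real n+2)) len \<omega>}"

definition NZ :: "nat \<Rightarrow> real \<Rightarrow> real \<Rightarrow> 'a set" where
  "NZ k len y = (\<Union>N. \<Inter>n. NZA k len y (n+N))"

lemma NZA_sets: "len > 0 \<Longrightarrow> NZA k len y n \<in> sets M"
  unfolding NZA_def by (intro sets.Un Dmeas) auto

lemma NZ_sets: "len > 0 \<Longrightarrow> NZ k len y \<in> sets M"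
  unfolding NZ_def using NZA_sets by (intro sets.countable_UN sets.countable_INT) auto

lemma NZ_prob:
  assumes len: "len > 0" and y: "y > 0"
  shows "prob (NZ k len y) \<le> C3 * (2*len/y) powr \<beta>"
proof -
  define B where "B N = (\<Inter>n. NZA k len y (n+N))" for N
  have Bs: "B N \<in> sets M" for N unfolding B_def using NZA_sets len by auto
  have inc: "incseq B" unfolding B_def incseq_def
  proof (intro allI impI subsetI)
    fix m n :: nat and \<omega> assume mn: "m \<le> n" and \<omega>: "\<omega> \<in> (\<Inter>i. NZA k len y (i+m))"
    show "\<omega> \<in> (\<Inter>i. NZA k len y (i+n))"
    proof
      fix i have "NZA k len y (i+n) = NZA k len y ((i + (n-m)) + m)" using mn by simp
      then show "\<omega> \<in> NZA k len y (i+n)" using \<omega> by auto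
    qed
  qed
  have PB: "prob (B N) \<le> C3 * (2*len/y) powr \<beta>" for N
  proof -
    define r where "r n = len/(real (n+N)+2)" for n
    have r: "0 < r n" "r n \<le> len" for n using len unfolding r_def by (auto simp: field_simps)
    have b: "prob (B N) \<le> K0 * r n / (y/2) + C3 * (2*len/y) powr \<beta>" for n
    proof -
      have "prob (B N) \<le> prob (NZA k len y (n+N))"
        using NZA_sets[OF len] by (intro finite_measure_mono) (auto simp: B_def)
      also have "\<dots> \<le> prob {\<omega>\<in>space M. y/2 < \<bar>r n * X k (r n) \<omega>\<bar>} + prob {\<omega>\<in>space M. ereal (y/2) \<le> Dsup X k (r n) len \<omega>}"
        unfolding NZA_def r_def using r len y by (intro measure_Un_le Dmeas) (auto simp: r_def)
      also have "prob {\<omega>\<in>space M. y/2 < \<bar>r n * X k (r n) \<omega>\<bar>} \<le> K0 * r n / (y/2)"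
        using r y by (intro markovf) auto
      also have "prob {\<omega>\<in>space M. ereal (y/2) \<le> Dsup X k (r n) len \<omega>} \<le> C3 * (len/(y/2)) powr \<beta>"
        using r y len by (intro S3) auto
      finally show ?thesis by (simp add: field_simps)
    qed
    have lim: "(\<lambda>n. K0 * r n / (y/2) + C3 * (2*len/y) powr \<beta>) \<longlonglongrightarrow> 0 + C3 * (2*len/y) powr \<beta>"
    proof (intro tendsto_add tendsto_const)
      have "(\<lambda>n. len / ((real N + 2) + real n)) \<longlonglongrightarrow> 0"
        by (intro real_tendsto_divide_at_top[OF tendsto_const] filterlim_tendsto_add_at_top[OF tendsto_const filterlim_real_sequentially])
      moreover have "(\<lambda>n. len / ((real N + 2) + real n)) = r" unfolding r_def by (auto simp: algebra_simps)
      ultimately have "(\<lambda>n. r n) \<longlonglongrightarrow> 0" by simp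
      then have "(\<lambda>n. K0 * r n / (y/2)) \<longlonglongrightarrow> K0 * 0 / (y/2)"
        by (intro tendsto_divide tendsto_mult tendsto_const) (use y in auto)
      then show "(\<lambda>n. K0 * r n / (y/2)) \<longlonglongrightarrow> 0" by simp
    qed
    show ?thesis using LIMSEQ_le_const[OF lim] b by auto
  qed
  have "(\<lambda>N. prob (B N)) \<longlonglongrightarrow> prob (\<Union>N. B N)"
    using Bs inc by (intro finite_Lim_measure_incseq) auto
  then have "prob (\<Union>N. B N) \<le> C3 * (2*len/y) powr \<beta>"
    using PB by (intro LIMSEQ_le_const2) auto
  then show ?thesis unfolding NZ_def B_def .
qed

lemma NZ_prop:
  assumes len: "len > 0" and y: "y > 0" and \<omega>: "\<omega> \<in> space M" "\<omega> \<notin> NZ k len y"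
    and u: "0 < u" "u \<le> len"
  shows "\<bar>u * X k u \<omega>\<bar> \<le> y"
proof (rule ccontr)
  assume big: "\<not> \<bar>u * X k u \<omega>\<bar> \<le> y"
  obtain N :: nat where N: "len / u \<le> real N" using real_arch_simple by blast
  have "\<omega> \<in> NZA k len y (n+N)" for n
  proof -
    define r where "r = len/(real (n+N)+2)"
    have lN: "len \<le> u * real N" using N u by (simp add: divide_le_eq mult.commute)
    have "u * real N \<le> u * (real (n+N) + 2)" by (rule mult_left_mono) (use u in auto)
    then have "len \<le> u * (real (n+N) + 2)" using lN by linarith
    then have r: "0 < r" "r \<le> u" using len u unfolding r_def by (auto simp: field_simps)
    have "ereal \<bar>(r + (u - r)) * X k (r + (u - r)) \<omega> - r * X k r \<omega>\<bar> \<le> Dsup X k r len \<omega>"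
      using r u by (intro Dsup_ge) auto
    then have D: "ereal \<bar>u * X k u \<omega> - r * X k r \<omega>\<bar> \<le> Dsup X k r len \<omega>" by simp
    have "y/2 < \<bar>r * X k r \<omega>\<bar> \<or> y/2 \<le> \<bar>u * X k u \<omega> - r * X k r \<omega>\<bar>" using big by linarith
    moreover have "y/2 \<le> \<bar>u * X k u \<omega> - r * X k r \<omega>\<bar> \<Longrightarrow> ereal (y/2) \<le> Dsup X k r len \<omega>"
      by (rule order_trans[OF _ D]) simp
    ultimately show ?thesis using \<omega>(1) unfolding NZA_def r_def[symmetric] by auto
  qed
  then have "\<omega> \<in> NZ k len y" unfolding NZ_def by blast
  then show False using \<omega> by auto
qed

lemma indepY:
  fixes g :: "real \<Rightarrow> real" and cc :: "nat \<Rightarrow> real"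
  assumes g[measurable]: "g \<in> borel_measurable borel" and cc: "\<And>k. k \<in> K \<Longrightarrow> cc k > 0"
  shows "indep_vars (\<lambda>_. borel) (\<lambda>k \<omega>. g (X k (cc k) \<omega>)) K"
proof -
  have "indep_vars (\<lambda>_. Pi\<^sub>M {0<..} (\<lambda>_. borel)) (\<lambda>k \<omega>. restrict (\<lambda>m. X k m \<omega>) {0<..}) K"
    by (rule indep_vars_subset[OF indep]) auto
  then have "indep_vars (\<lambda>_. borel) (\<lambda>k \<omega>. (\<lambda>p. g (p (cc k))) (restrict (\<lambda>m. X k m \<omega>) {0<..})) K"
  proof (rule indep_vars_compose2)
    fix k assume "k \<in> K"
    then have "cc k \<in> {0<..}" using cc by auto
    then show "(\<lambda>p. g (p (cc k))) \<in> measurable (Pi\<^sub>M {0<..} (\<lambda>_. borel)) borel"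
      by measurable
  qed
  then show ?thesis
    by (rule indep_vars_cong[THEN iffD1, rotated 3]) (auto simp: cc)
qed

end


context slln begin

definition "Atl = C3 * 2 powr \<beta>"
definition "A1c = 2*Atl/(1 - 2 powr (1-\<beta>))"
definition "A2c = Atl * 2 powr \<beta>/(1 - 2 powr (\<beta>-2))"

lemma consts_nonneg: "Atl \<ge> 0" "A1c \<ge> 0" "A2c \<ge> 0"
proof -
  show a: "Atl \<ge> 0" unfolding Atl_def using C3 by auto
  have "2 powr (1-\<beta>) < 1" using beta by (simp add: powr_less_one)
  then show "A1c \<ge> 0" unfolding A1c_def using a by auto
  have "2 powr (\<beta>-2) < 1" using beta by (simp add: powr_less_one)
  then show "A2c \<ge> 0" unfolding A2c_def using a by auto
qed

lemma small_rho:
  fixes c T a :: real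
  assumes c: "0 < c" "c \<le> T powr a" and T: "T \<ge> 1"
  shows "(c/T) powr \<beta> \<le> (c/T) * T powr ((a-1)*(\<beta>-1))"
proof -
  have T0: "T > 0" using T by auto
  have e1: "(c/T) powr \<beta> = (c/T) * (c/T) powr (\<beta>-1)"
  proof -
    have "(c/T) powr \<beta> = (c/T) powr (1 + (\<beta>-1))" by simp
    also have "\<dots> = (c/T) * (c/T) powr (\<beta>-1)" by (subst powr_add) (use c T0 in auto)
    finally show ?thesis .
  qed
  have "(c/T) powr (\<beta>-1) \<le> (T powr a / T) powr (\<beta>-1)"
    using c T0 beta by (intro powr_mono2) (auto simp: divide_right_mono)
  also have "T powr a / T = T powr (a-1)" using T0 by (simp add: powr_diff)
  also have "(T powr (a-1)) powr (\<beta>-1) = T powr ((a-1)*(\<beta>-1))" by (simp add: powr_powr)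
  finally have e2: "(c/T) powr (\<beta>-1) \<le> T powr ((a-1)*(\<beta>-1))" .
  show ?thesis unfolding e1 using e2 c T0 by (intro mult_left_mono) auto
qed

lemma large_delta:
  fixes c T a :: real
  assumes c: "T powr a < c" and T: "T \<ge> 1"
  shows "c powr -\<delta> \<le> c * T powr (-a-a*\<delta>)"
proof -
  have T0: "T > 0" using T by auto
  have "0 < T powr a" using T0 by simp
  then have c0: "c > 0" using c by linarith
  have "c powr -\<delta> \<le> (T powr a) powr -\<delta>"
    using c delta T0 by (intro powr_mono2') auto
  also have "\<dots> = T powr (-a*\<delta>)" by (simp add: powr_powr)
  also have "\<dots> \<le> (c * T powr (-a)) * T powr (-a*\<delta>)"
  proof -
    have "T powr a * T powr (-a) = 1" using T0 by (simp add: powr_add[symmetric])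
    then have "1 \<le> c * T powr (-a)" using c T0
      by (metis less_eq_real_def mult_right_mono powr_ge_zero)
    then show ?thesis by (simp add: mult_le_cancel_right1)
  qed
  also have "\<dots> = c * T powr (-a-a*\<delta>)" by (simp add: powr_add[symmetric] mult.assoc)
  finally show ?thesis .
qed

lemma blocksum:
  fixes K :: "nat set" and c :: "nat \<Rightarrow> real" and \<phi> :: "real \<Rightarrow> real" and T \<epsilon> a Cc :: real
  assumes fin: "finite K" and cpos: "\<And>k. k\<in>K \<Longrightarrow> c k > 0" and csum: "sum c K \<le> T" and T: "T \<ge> 1"
    and eps: "\<epsilon> > 0" and a: "0 < a" "a < 1"
    and \<phi>m[measurable]: "\<phi> \<in> borel_measurable borel" and \<phi>a: "\<And>x. \<bar>\<phi> x\<bar> = \<bar>x\<bar>"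
    and Se: "\<And>k m. m > 0 \<Longrightarrow> prob {\<omega>\<in>space M. \<epsilon> < \<bar>X k m \<omega>\<bar>} \<le> Cc * m powr -\<delta>"
  shows "\<exists>E\<in>sets M. prob E \<le> (Atl + A2c/\<epsilon>^2) * T powr ((a-1)*(\<beta>-1)) + Cc * T powr (1-a-a*\<delta>) \<and>
     (\<forall>\<omega>\<in>space M - E. \<bar>\<Sum>k\<in>{k\<in>K. c k \<le> T powr a}. c k * (\<phi> (X k (c k) \<omega>) - expectation (\<lambda>\<omega>. \<phi> (X k (c k) \<omega>)))\<bar>
            < \<epsilon>*T + A1c*T*T powr ((a-1)*(\<beta>-1))
        \<and> (\<forall>k\<in>K. T powr a < c k \<longrightarrow> \<bar>X k (c k) \<omega>\<bar> \<le> \<epsilon>))"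
proof -
  have T0: "T > 0" using T by auto
  define Ks where "Ks = {k\<in>K. c k \<le> T powr a}"
  define Kl where "Kl = {k\<in>K. T powr a < c k}"
  have finKs: "finite Ks" "finite Kl" using fin unfolding Ks_def Kl_def by auto
  define cc where "cc k = (if k \<in> K then c k else 1)" for k
  have ccpos: "cc k > 0" for k using cpos unfolding cc_def by auto
  define Y where "Y k \<omega> = \<phi> (X k (cc k) \<omega>)" for k \<omega>
  have Ym: "Y k \<in> borel_measurable M" for k
  proof -
    have "X k (cc k) \<in> borel_measurable M" using ccpos[of k] by (rule Xmeas)
    then show ?thesis unfolding Y_def by (rule measurable_compose) (rule \<phi>m)
  qed
  have Yint: "integrable M (Y k)" for k
    by (rule Bochner_Integration.integrable_bound[OF integ[where k=k and m="cc k", OF ccpos[of k]] Ym]) (simp add: Y_def \<phi>a)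
  have indY: "indep_vars (\<lambda>_. borel) Y Ks"
    unfolding Y_def by (rule indepY[OF \<phi>m]) (rule ccpos)
  have tailY: "prob {\<omega>\<in>space M. x < \<bar>Y k \<omega>\<bar>} \<le> Atl * x powr -\<beta>" if "x > 0" for k x
    unfolding Y_def \<phi>a Atl_def using tailX[OF ccpos that] .
  have ccK: "k \<in> Ks \<Longrightarrow> cc k = c k" for k unfolding cc_def Ks_def by auto
  have cposKs: "k \<in> Ks \<Longrightarrow> c k > 0" for k using cpos unfolding Ks_def by auto
  note ST = sum_trunc[OF finKs(1) indY Ym Yint cposKs T0 eps beta(1) beta(2) consts_nonneg(1) tailY]
  define \<rho> where "\<rho> = (\<Sum>k\<in>Ks. (c k/T) powr \<beta>)"
  define Tb where "Tb = T powr ((a-1)*(\<beta>-1))"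
  have \<rho>: "\<rho> \<le> Tb"
  proof -
    have "\<rho> \<le> (\<Sum>k\<in>Ks. (c k/T) * Tb)"
      unfolding \<rho>_def Tb_def using cpos T by (intro sum_mono small_rho) (auto simp: Ks_def)
    also have "\<dots> = (\<Sum>k\<in>Ks. c k) / T * Tb" by (simp add: sum_distrib_right sum_divide_distrib)
    also have "(\<Sum>k\<in>Ks. c k) \<le> sum c K"
      using fin cpos by (intro sum_mono2) (auto simp: Ks_def less_imp_le)
    then have "(\<Sum>k\<in>Ks. c k) / T * Tb \<le> 1 * Tb"
      using csum T0 by (intro mult_right_mono) (auto simp: Tb_def)
    finally show ?thesis by simp
  qed
  define Es where "Es = {\<omega>\<in>space M. \<epsilon>*T + A1c*T*Tb \<le> \<bar>\<Sum>k\<in>Ks. c k * (\<phi> (X k (c k) \<omega>) - expectation (\<lambda>\<omega>. \<phi> (X k (c k) \<omega>)))\<bar>}"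
  define Es0 where "Es0 = {\<omega>\<in>space M. \<epsilon>*T + A1c * T * \<rho> \<le> \<bar>\<Sum>k\<in>Ks. c k * (Y k \<omega> - expectation (Y k))\<bar>}"
  have sumY: "(\<Sum>k\<in>Ks. c k * (Y k \<omega> - expectation (Y k))) = (\<Sum>k\<in>Ks. c k * (\<phi> (X k (c k) \<omega>) - expectation (\<lambda>\<omega>. \<phi> (X k (c k) \<omega>))))" for \<omega>
  proof (intro sum.cong refl)
    fix k assume k: "k \<in> Ks"
    then have "Y k = (\<lambda>\<omega>. \<phi> (X k (c k) \<omega>))" by (auto simp: Y_def ccK)
    then show "c k * (Y k \<omega> - expectation (Y k)) = c k * (\<phi> (X k (c k) \<omega>) - expectation (\<lambda>\<omega>. \<phi> (X k (c k) \<omega>)))"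
      by simp
  qed
  have EsEs0: "Es \<subseteq> Es0"
  proof -
    have "A1c * T * \<rho> \<le> A1c * T * Tb" using \<rho> consts_nonneg T0 by (intro mult_left_mono) auto
    then show ?thesis unfolding Es_def Es0_def sumY by auto
  qed
  have Es0m: "Es0 \<in> sets M" unfolding Es0_def using Ym by measurable
  have Esm: "Es \<in> sets M"
  proof -
    have "(\<lambda>\<omega>. \<Sum>k\<in>Ks. c k * (\<phi> (X k (c k) \<omega>) - expectation (\<lambda>\<omega>. \<phi> (X k (c k) \<omega>)))) \<in> borel_measurable M"
      unfolding sumY[symmetric] using Ym by measurable
    then show ?thesis unfolding Es_def by measurable
  qed
  have PEs: "prob Es \<le> (Atl + A2c/\<epsilon>^2) * Tb"
  proof -
    have "prob Es \<le> prob Es0" using EsEs0 Es0m by (intro finite_measure_mono)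
    also have "\<dots> \<le> (Atl + A2c/\<epsilon>^2) * \<rho>" using ST unfolding Es0_def \<rho>_def A1c_def A2c_def by simp
    also have "\<dots> \<le> (Atl + A2c/\<epsilon>^2) * Tb" using \<rho> consts_nonneg by (intro mult_left_mono) auto
    finally show ?thesis .
  qed
  define El where "El = (\<Union>k\<in>Kl. {\<omega>\<in>space M. \<epsilon> < \<bar>X k (c k) \<omega>\<bar>})"
  have cposKl: "k \<in> Kl \<Longrightarrow> c k > 0" for k using cpos unfolding Kl_def by auto
  have Elm: "El \<in> sets M" unfolding El_def using cposKl Xmeas
    by (intro sets.finite_UN finKs(2)) (auto intro: measurable_sets)
  have Cc0: "Cc \<ge> 0"
  proof -
    have "prob {\<omega>\<in>space M. \<epsilon> < \<bar>X 0 1 \<omega>\<bar>} \<le> Cc" using Se[of 1 0] by simp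
    then show ?thesis using measure_nonneg[of M "{\<omega>\<in>space M. \<epsilon> < \<bar>X 0 1 \<omega>\<bar>}"] by linarith
  qed
  have PEl: "prob El \<le> Cc * T powr (1-a-a*\<delta>)"
  proof -
    have "prob El \<le> (\<Sum>k\<in>Kl. prob {\<omega>\<in>space M. \<epsilon> < \<bar>X k (c k) \<omega>\<bar>})"
      unfolding El_def using cposKl Xmeas
      by (intro finite_measure_subadditive_finite finKs(2)) (auto intro: measurable_sets)
    also have "\<dots> \<le> (\<Sum>k\<in>Kl. Cc * (c k * T powr (-a-a*\<delta>)))"
    proof (intro sum_mono)
      fix k assume k: "k \<in> Kl"
      have "prob {\<omega>\<in>space M. \<epsilon> < \<bar>X k (c k) \<omega>\<bar>} \<le> Cc * c k powr -\<delta>" using Se cposKl[OF k] by auto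
      also have "\<dots> \<le> Cc * (c k * T powr (-a-a*\<delta>))"
        using k T Cc0 by (intro mult_left_mono large_delta) (auto simp: Kl_def)
      finally show "prob {\<omega>\<in>space M. \<epsilon> < \<bar>X k (c k) \<omega>\<bar>} \<le> Cc * (c k * T powr (-a-a*\<delta>))" .
    qed
    also have "\<dots> = Cc * T powr (-a-a*\<delta>) * (\<Sum>k\<in>Kl. c k)" by (simp add: sum_distrib_left sum_distrib_right mult_ac)
    also have "(\<Sum>k\<in>Kl. c k) \<le> T"
    proof -
      have "(\<Sum>k\<in>Kl. c k) \<le> sum c K"
        using fin cpos by (intro sum_mono2) (auto simp: Kl_def less_imp_le)
      then show ?thesis using csum by linarith
    qed
    then have "Cc * T powr (-a-a*\<delta>) * (\<Sum>k\<in>Kl. c k) \<le> Cc * T powr (-a-a*\<delta>) * T"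
      using Cc0 by (intro mult_left_mono) auto
    also have "Cc * T powr (-a-a*\<delta>) * T = Cc * T powr (1-a-a*\<delta>)"
    proof -
      have "T powr (-a-a*\<delta>) * T powr 1 = T powr (-a-a*\<delta> + 1)" by (rule powr_add[symmetric])
      moreover have "-a-a*\<delta> + 1 = 1-a-a*\<delta>" by simp
      ultimately have "T powr (-a-a*\<delta>) * T = T powr (1-a-a*\<delta>)" using T0 by simp
      then show ?thesis by (simp add: mult.assoc)
    qed
    finally show ?thesis .
  qed
  show ?thesis
  proof (intro bexI[of _ "Es \<union> El"] conjI)
    show "Es \<union> El \<in> sets M" using Esm Elm by auto
    have "prob (Es \<union> El) \<le> prob Es + prob El" using Esm Elm by (rule measure_Un_le)
    then show "prob (Es \<union> El) \<le> (Atl + A2c/\<epsilon>^2) * T powr ((a-1)*(\<beta>-1)) + Cc * T powr (1-a-a*\<delta>)"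
      using PEs PEl unfolding Tb_def by linarith
    show "\<forall>\<omega>\<in>space M - (Es \<union> El). \<bar>\<Sum>k\<in>{k\<in>K. c k \<le> T powr a}. c k * (\<phi> (X k (c k) \<omega>) - expectation (\<lambda>\<omega>. \<phi> (X k (c k) \<omega>)))\<bar>
            < \<epsilon>*T + A1c*T*T powr ((a-1)*(\<beta>-1))
        \<and> (\<forall>k\<in>K. T powr a < c k \<longrightarrow> \<bar>X k (c k) \<omega>\<bar> \<le> \<epsilon>)"
      unfolding Es_def El_def Kl_def Ks_def Tb_def by (auto simp: not_le)
  qed
qed

end


context slln begin

lemma Mp0: "Mpart ms 0 = 0" unfolding Mpart_def by simp

lemma MpSuc: "Mpart ms (Suc n) = Mpart ms n + ms (Suc n)"
  unfolding Mpart_def by (simp add: sum.cl_ivl_Suc)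

lemma Mp_less: "a < b \<Longrightarrow> Mpart ms a < Mpart ms b"
proof (induction b)
  case 0 then show ?case by simp
next
  case (Suc b)
  have "ms (Suc b) > 0" using mpos by auto
  then show ?case using Suc by (cases "a = b") (auto simp: MpSuc)
qed

lemma Mp_mono: "a \<le> b \<Longrightarrow> Mpart ms a \<le> Mpart ms b"
  using Mp_less by (cases "a = b") (auto simp: le_less)

lemma Mp_diff: "a \<le> b \<Longrightarrow> (\<Sum>k\<in>{Suc a..b}. ms k) = Mpart ms b - Mpart ms a"
proof (induction b)
  case 0 then show ?case by simp
next
  case (Suc b)
  show ?case
  proof (cases "a = Suc b")
    case True then show ?thesis by simp
  next
    case False
    then have "a \<le> b" using Suc by auto
    then show ?thesis using Suc by (simp add: sum.cl_ivl_Suc MpSuc)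
  qed
qed

lemma Mp_lessThan: "l \<ge> 1 \<Longrightarrow> (\<Sum>k\<in>{1..<l}. ms k) = Mpart ms (l-1)"
proof -
  assume "l \<ge> 1"
  then have "{1..<l} = {1..l-1}" by auto
  then show ?thesis unfolding Mpart_def by simp
qed

lemma ex_ge: "\<exists>l. t \<le> Mpart ms l"
proof -
  have "eventually (\<lambda>n. t \<le> Mpart ms n) sequentially"
    using mdiv by (simp add: filterlim_at_top)
  then show ?thesis by (auto simp: eventually_sequentially)
qed

lemma ell_ge: "t \<le> Mpart ms (ell ms t)"
  unfolding ell_def by (rule LeastI_ex[OF ex_ge])

lemma ell_lt_iff: "k < ell ms t \<longleftrightarrow> Mpart ms k < t"
proof
  assume "k < ell ms t"
  then have "\<not> t \<le> Mpart ms k" unfolding ell_def by (rule not_less_Least)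
  then show "Mpart ms k < t" by simp
next
  assume a: "Mpart ms k < t"
  show "k < ell ms t"
  proof (rule ccontr)
    assume "\<not> k < ell ms t"
    then have "Mpart ms (ell ms t) \<le> Mpart ms k" by (intro Mp_mono) auto
    then show False using ell_ge[of t] a by linarith
  qed
qed

lemma ell_pos: "t > 0 \<Longrightarrow> ell ms t \<ge> 1"
  using ell_lt_iff[of 0 t] by (simp add: Mp0)

lemma ell_prev: "t > 0 \<Longrightarrow> Mpart ms (ell ms t - 1) < t"
  using ell_lt_iff[of "ell ms t - 1" t] ell_pos[of t] by auto

lemma ell_mono: "t \<le> t' \<Longrightarrow> ell ms t \<le> ell ms t'"
proof (rule ccontr)
  assume tt: "t \<le> t'" and "\<not> ell ms t \<le> ell ms t'"
  then have "ell ms t' < ell ms t" by auto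
  then have "Mpart ms (ell ms t') < t" by (simp add: ell_lt_iff)
  then show False using ell_ge[of t'] tt by linarith
qed

lemma Mp_ell: "t > 0 \<Longrightarrow> Mpart ms (ell ms t) = Mpart ms (ell ms t - 1) + ms (ell ms t)"
  using MpSuc[of "ell ms t - 1"] ell_pos[of t] by simp

lemma tb_pos: "t > 0 \<Longrightarrow> tbar ms t > 0"
  unfolding tbar_def using ell_prev[of t] by simp

lemma tb_le: "t > 0 \<Longrightarrow> tbar ms t \<le> ms (ell ms t)"
  unfolding tbar_def using Mp_ell[of t] ell_ge[of t] by simp

lemma F_repr:
  assumes "t > 0"
  shows "t * St X ms t \<omega> = (\<Sum>k\<in>{1..<ell ms t}. ms k * X k (ms k) \<omega>) + tbar ms t * X (ell ms t) (tbar ms t) \<omega>"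
proof -
  have "{1..ell ms t - 1} = {1..<ell ms t}" using ell_pos[OF assms] by auto
  then show ?thesis unfolding St_def using assms by (simp add: sum_distrib_left field_simps)
qed

definition FF :: "(nat \<Rightarrow> real \<Rightarrow> real) \<Rightarrow> real \<Rightarrow> real" where
  "FF G t = (\<Sum>k\<in>{1..<ell ms t}. G k (ms k)) + G (ell ms t) (tbar ms t)"

lemma decomp_same:
  assumes "0 < T" "T \<le> t" "ell ms t = ell ms T"
  shows "FF G t - FF G T = G (ell ms T) (tbar ms T + (t - T)) - G (ell ms T) (tbar ms T)"
  using assms unfolding FF_def tbar_def by simp

lemma decomp_diff:
  assumes "0 < T" "T \<le> t" "ell ms T < ell ms t"
  shows "FF G t - FF G T = (G (ell ms T) (ms (ell ms T)) - G (ell ms T) (tbar ms T))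
     + (\<Sum>k\<in>{Suc (ell ms T)..<ell ms t}. G k (ms k)) + G (ell ms t) (tbar ms t)"
proof -
  let ?k0 = "ell ms T" and ?l = "ell ms t"
  have k0: "1 \<le> ?k0" using ell_pos assms by auto
  have "(\<Sum>k\<in>{1..<?l}. G k (ms k)) = (\<Sum>k\<in>{1..<?k0}. G k (ms k)) + (\<Sum>k\<in>{?k0..<?l}. G k (ms k))"
    using k0 assms by (intro sum.atLeastLessThan_concat[symmetric]) auto
  also have "(\<Sum>k\<in>{?k0..<?l}. G k (ms k)) = G ?k0 (ms ?k0) + (\<Sum>k\<in>{Suc ?k0..<?l}. G k (ms k))"
    using assms by (intro sum.atLeast_Suc_lessThan) auto
  finally show ?thesis unfolding FF_def by simp
qed

end


context slln begin

lemma part_F: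
  fixes T \<epsilon> a Cc :: real
  assumes T: "1 \<le> T" and eps: "\<epsilon> > 0" and a: "0 < a" "a < 1"
   and Se: "\<And>k m. m>0 \<Longrightarrow> prob {\<omega>\<in>space M. \<epsilon> < \<bar>X k m \<omega>\<bar>} \<le> Cc * m powr -\<delta>"
  shows "\<exists>E\<in>sets M. prob E \<le> (Atl + A2c/\<epsilon>^2) * T powr ((a-1)*(\<beta>-1)) + Cc * T powr (1-a-a*\<delta>)
     \<and> (\<forall>\<omega>\<in>space M - E. \<bar>T * St X ms T \<omega>\<bar> \<le> 2*\<epsilon>*T + A1c*T*T powr ((a-1)*(\<beta>-1)))"
proof -
  have T0: "T > 0" using T by auto
  define k0 where "k0 = ell ms T"
  have k0: "k0 \<ge> 1" using ell_pos[OF T0] unfolding k0_def .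
  define cT where "cT k = (if k = k0 then tbar ms T else ms k)" for k
  define K where "K = {1..k0}"
  have cpos: "k \<in> K \<Longrightarrow> cT k > 0" for k
    using mpos tb_pos[OF T0] unfolding cT_def K_def k0_def by auto
  have Kins: "K = insert k0 {1..<k0}" unfolding K_def using k0 by auto
  have csum: "sum cT K = T"
  proof -
    have "sum cT K = cT k0 + (\<Sum>k\<in>{1..<k0}. cT k)" unfolding Kins by simp
    also have "(\<Sum>k\<in>{1..<k0}. cT k) = (\<Sum>k\<in>{1..<k0}. ms k)" by (intro sum.cong) (auto simp: cT_def)
    also have "\<dots> = Mpart ms (k0 - 1)" using k0 by (rule Mp_lessThan)
    finally show ?thesis unfolding cT_def k0_def tbar_def by simp
  qed
  have idm: "(\<lambda>x::real. x) \<in> borel_measurable borel" by simp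
  obtain E where E: "E \<in> sets M" "prob E \<le> (Atl + A2c/\<epsilon>^2) * T powr ((a-1)*(\<beta>-1)) + Cc * T powr (1-a-a*\<delta>)"
    and Eprop: "\<And>\<omega>. \<omega>\<in>space M - E \<Longrightarrow> \<bar>\<Sum>k\<in>{k\<in>K. cT k \<le> T powr a}. cT k * (X k (cT k) \<omega> - expectation (\<lambda>\<omega>. X k (cT k) \<omega>))\<bar>
            < \<epsilon>*T + A1c*T*T powr ((a-1)*(\<beta>-1)) \<and> (\<forall>k\<in>K. T powr a < cT k \<longrightarrow> \<bar>X k (cT k) \<omega>\<bar> \<le> \<epsilon>)"
    using blocksum[of K cT T \<epsilon> a "\<lambda>x. x" Cc, OF _ cpos _ T eps a idm _ Se] csum unfolding K_def by auto
  show ?thesis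
  proof (intro bexI[OF _ E(1)] conjI E(2) ballI)
    fix \<omega> assume \<omega>: "\<omega> \<in> space M - E"
    define Ks where "Ks = {k\<in>K. cT k \<le> T powr a}"
    define Kl where "Kl = {k\<in>K. \<not> cT k \<le> T powr a}"
    have fK: "finite K" unfolding K_def by auto
    have "T * St X ms T \<omega> = (\<Sum>k\<in>K. cT k * X k (cT k) \<omega>)"
    proof -
      have "T * St X ms T \<omega> = (\<Sum>k\<in>{1..<k0}. ms k * X k (ms k) \<omega>) + tbar ms T * X k0 (tbar ms T) \<omega>"
        using F_repr[OF T0] unfolding k0_def by simp
      also have "(\<Sum>k\<in>{1..<k0}. ms k * X k (ms k) \<omega>) = (\<Sum>k\<in>{1..<k0}. cT k * X k (cT k) \<omega>)"
        by (intro sum.cong) (auto simp: cT_def)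
      finally show ?thesis unfolding Kins cT_def by simp
    qed
    also have "\<dots> = (\<Sum>k\<in>Ks. cT k * X k (cT k) \<omega>) + (\<Sum>k\<in>Kl. cT k * X k (cT k) \<omega>)"
    proof -
      have "K = Ks \<union> Kl" "Ks \<inter> Kl = {}" by (auto simp: Ks_def Kl_def)
      moreover have "finite Ks" "finite Kl" using fK by (auto simp: Ks_def Kl_def)
      ultimately show ?thesis by (simp add: sum.union_disjoint)
    qed
    finally have FT: "T * St X ms T \<omega> = (\<Sum>k\<in>Ks. cT k * X k (cT k) \<omega>) + (\<Sum>k\<in>Kl. cT k * X k (cT k) \<omega>)" .
    have s1: "\<bar>\<Sum>k\<in>Ks. cT k * X k (cT k) \<omega>\<bar> < \<epsilon>*T + A1c*T*T powr ((a-1)*(\<beta>-1))"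
    proof -
      have "(\<Sum>k\<in>Ks. cT k * (X k (cT k) \<omega> - expectation (\<lambda>\<omega>. X k (cT k) \<omega>))) = (\<Sum>k\<in>Ks. cT k * X k (cT k) \<omega>)"
        using cpos mean0 by (intro sum.cong refl) (auto simp: Ks_def)
      then show ?thesis using Eprop[OF \<omega>] unfolding Ks_def by simp
    qed
    have s2: "\<bar>\<Sum>k\<in>Kl. cT k * X k (cT k) \<omega>\<bar> \<le> \<epsilon> * T"
    proof -
      have "\<bar>\<Sum>k\<in>Kl. cT k * X k (cT k) \<omega>\<bar> \<le> (\<Sum>k\<in>Kl. \<bar>cT k * X k (cT k) \<omega>\<bar>)" by (rule sum_abs)
      also have "\<dots> \<le> (\<Sum>k\<in>Kl. cT k * \<epsilon>)"
      proof (intro sum_mono)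
        fix k assume k: "k \<in> Kl"
        then have "\<bar>X k (cT k) \<omega>\<bar> \<le> \<epsilon>" "cT k > 0" using Eprop[OF \<omega>] cpos by (auto simp: Kl_def)
        then show "\<bar>cT k * X k (cT k) \<omega>\<bar> \<le> cT k * \<epsilon>" by (simp add: abs_mult mult_left_mono)
      qed
      also have "\<dots> = \<epsilon> * (\<Sum>k\<in>Kl. cT k)" by (simp add: sum_distrib_left mult.commute)
      also have "(\<Sum>k\<in>Kl. cT k) \<le> sum cT K"
        using fK cpos by (intro sum_mono2) (auto simp: Kl_def less_imp_le)
      then have "\<epsilon> * (\<Sum>k\<in>Kl. cT k) \<le> \<epsilon> * T" using csum eps by (intro mult_left_mono) auto
      finally show ?thesis .
    qed
    show "\<bar>T * St X ms T \<omega>\<bar> \<le> 2*\<epsilon>*T + A1c*T*T powr ((a-1)*(\<beta>-1))"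
      using FT s1 s2 by linarith
  qed
qed

end


context slln begin

lemma part_mid:
  fixes T T' \<epsilon> a Cc :: real
  assumes T: "1 \<le> T" and TT: "T < T'" "T' - T \<le> T" and eps: "\<epsilon> > 0" and a: "0 < a" "a < 1"
   and Se: "\<And>k m. m>0 \<Longrightarrow> prob {\<omega>\<in>space M. \<epsilon> < \<bar>X k m \<omega>\<bar>} \<le> Cc * m powr -\<delta>"
  shows "\<exists>E\<in>sets M. prob E \<le> (Atl + A2c/\<epsilon>^2) * T powr ((a-1)*(\<beta>-1)) + Cc * T powr (1-a-a*\<delta>)
     \<and> (\<forall>\<omega>\<in>space M - E. (\<Sum>k\<in>{Suc (ell ms T)..<ell ms T'}. ms k * \<bar>X k (ms k) \<omega>\<bar>)
          \<le> K0*(T'-T) + 2*\<epsilon>*T + A1c*T*T powr ((a-1)*(\<beta>-1)))"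
proof -
  have T0: "T > 0" using T by auto
  define k0 where "k0 = ell ms T"
  define k1 where "k1 = ell ms T'"
  define K where "K = {Suc k0..<k1}"
  have fK: "finite K" unfolding K_def by auto
  have cpos: "k \<in> K \<Longrightarrow> ms k > 0" for k using mpos unfolding K_def by auto
  have msum: "sum ms K \<le> T' - T"
  proof (cases "Suc k0 < k1")
    case False then have "K = {}" unfolding K_def by auto
    then show ?thesis using TT by simp
  next
    case True
    then have "K = {Suc k0..k1-1}" unfolding K_def by auto
    then have "sum ms K = Mpart ms (k1-1) - Mpart ms k0" using True by (simp add: Mp_diff)
    moreover have "Mpart ms (k1-1) < T'" unfolding k1_def using TT T0 by (intro ell_prev) auto
    moreover have "T \<le> Mpart ms k0" unfolding k0_def by (rule ell_ge)
    ultimately show ?thesis by linarith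
  qed
  have absm: "(\<lambda>x::real. \<bar>x\<bar>) \<in> borel_measurable borel" by measurable
  obtain E where E: "E \<in> sets M" "prob E \<le> (Atl + A2c/\<epsilon>^2) * T powr ((a-1)*(\<beta>-1)) + Cc * T powr (1-a-a*\<delta>)"
    and Eprop: "\<And>\<omega>. \<omega>\<in>space M - E \<Longrightarrow> \<bar>\<Sum>k\<in>{k\<in>K. ms k \<le> T powr a}. ms k * (\<bar>X k (ms k) \<omega>\<bar> - expectation (\<lambda>\<omega>. \<bar>X k (ms k) \<omega>\<bar>))\<bar>
            < \<epsilon>*T + A1c*T*T powr ((a-1)*(\<beta>-1)) \<and> (\<forall>k\<in>K. T powr a < ms k \<longrightarrow> \<bar>X k (ms k) \<omega>\<bar> \<le> \<epsilon>)"
    using blocksum[of K ms T \<epsilon> a "\<lambda>x. \<bar>x\<bar>" Cc, OF fK cpos _ T eps a absm _ Se] msum TT by auto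
  show ?thesis
  proof (intro bexI[OF _ E(1)] conjI E(2) ballI)
    fix \<omega> assume \<omega>: "\<omega> \<in> space M - E"
    define Ks where "Ks = {k\<in>K. ms k \<le> T powr a}"
    define Kl where "Kl = {k\<in>K. \<not> ms k \<le> T powr a}"
    have split: "(\<Sum>k\<in>K. ms k * \<bar>X k (ms k) \<omega>\<bar>) = (\<Sum>k\<in>Ks. ms k * \<bar>X k (ms k) \<omega>\<bar>) + (\<Sum>k\<in>Kl. ms k * \<bar>X k (ms k) \<omega>\<bar>)"
    proof -
      have "K = Ks \<union> Kl" "Ks \<inter> Kl = {}" by (auto simp: Ks_def Kl_def)
      moreover have "finite Ks" "finite Kl" using fK by (auto simp: Ks_def Kl_def)
      ultimately show ?thesis by (simp add: sum.union_disjoint)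
    qed
    have sK: "sum ms Ks \<le> sum ms K" "sum ms Kl \<le> sum ms K"
      using fK cpos by (auto intro!: sum_mono2 simp: Ks_def Kl_def less_imp_le)
    have s1: "(\<Sum>k\<in>Ks. ms k * \<bar>X k (ms k) \<omega>\<bar>) \<le> \<epsilon>*T + A1c*T*T powr ((a-1)*(\<beta>-1)) + K0 * (T'-T)"
    proof -
      have "(\<Sum>k\<in>Ks. ms k * \<bar>X k (ms k) \<omega>\<bar>) = (\<Sum>k\<in>Ks. ms k * (\<bar>X k (ms k) \<omega>\<bar> - expectation (\<lambda>\<omega>. \<bar>X k (ms k) \<omega>\<bar>)))
          + (\<Sum>k\<in>Ks. ms k * expectation (\<lambda>\<omega>. \<bar>X k (ms k) \<omega>\<bar>))"
        by (simp add: sum.distrib[symmetric] algebra_simps)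
      also have "\<dots> \<le> \<bar>\<Sum>k\<in>Ks. ms k * (\<bar>X k (ms k) \<omega>\<bar> - expectation (\<lambda>\<omega>. \<bar>X k (ms k) \<omega>\<bar>))\<bar> + (\<Sum>k\<in>Ks. ms k * K0)"
      proof (intro add_mono abs_ge_self sum_mono)
        fix k assume "k \<in> Ks"
        then have "ms k > 0" using cpos by (auto simp: Ks_def)
        then show "ms k * expectation (\<lambda>\<omega>. \<bar>X k (ms k) \<omega>\<bar>) \<le> ms k * K0" using K0 by (intro mult_left_mono) auto
      qed
      also have "(\<Sum>k\<in>Ks. ms k * K0) = K0 * sum ms Ks" by (simp add: sum_distrib_left mult.commute)
      also have "K0 * sum ms Ks \<le> K0 * (T' - T)" using sK msum K0_nonneg by (intro mult_left_mono) auto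
      finally show ?thesis using Eprop[OF \<omega>] unfolding Ks_def by linarith
    qed
    have s2: "(\<Sum>k\<in>Kl. ms k * \<bar>X k (ms k) \<omega>\<bar>) \<le> \<epsilon> * T"
    proof -
      have "(\<Sum>k\<in>Kl. ms k * \<bar>X k (ms k) \<omega>\<bar>) \<le> (\<Sum>k\<in>Kl. ms k * \<epsilon>)"
      proof (intro sum_mono)
        fix k assume k: "k \<in> Kl"
        then have "\<bar>X k (ms k) \<omega>\<bar> \<le> \<epsilon>" "ms k > 0" using Eprop[OF \<omega>] cpos by (auto simp: Kl_def)
        then show "ms k * \<bar>X k (ms k) \<omega>\<bar> \<le> ms k * \<epsilon>" by (simp add: mult_left_mono)
      qed
      also have "\<dots> = \<epsilon> * sum ms Kl" by (simp add: sum_distrib_left mult.commute)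
      also have "\<dots> \<le> \<epsilon> * T" using sK msum TT eps by (intro mult_left_mono) auto
      finally show ?thesis .
    qed
    show "(\<Sum>k\<in>{Suc (ell ms T)..<ell ms T'}. ms k * \<bar>X k (ms k) \<omega>\<bar>) \<le> K0*(T'-T) + 2*\<epsilon>*T + A1c*T*T powr ((a-1)*(\<beta>-1))"
      using split s1 s2 unfolding K_def k0_def k1_def by linarith
  qed
qed

lemma part_first:
  fixes T T' \<epsilon> :: real
  assumes T0: "0 < T" and TT: "T < T'" and eps: "\<epsilon> > 0"
  shows "\<exists>E\<in>sets M. prob E \<le> C3 * (1/\<epsilon>) powr \<beta> * ((T'-T)/T) powr \<beta>
     \<and> (\<forall>\<omega>\<in>space M - E. \<forall>s. 0 \<le> s \<and> s \<le> Mpart ms (ell ms T) - T \<and> s < T' - T \<longrightarrow>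
          \<bar>(tbar ms T + s) * X (ell ms T) (tbar ms T + s) \<omega> - tbar ms T * X (ell ms T) (tbar ms T) \<omega>\<bar> < \<epsilon>*T)"
proof -
  define k0 where "k0 = ell ms T"
  define r where "r = tbar ms T"
  have r: "r > 0" unfolding r_def using tb_pos[OF T0] .
  define len where "len = min (Mpart ms k0 - T) (T' - T)"
  have bnd0: "0 \<le> C3 * (1/\<epsilon>) powr \<beta> * ((T'-T)/T) powr \<beta>" using C3 by auto
  show ?thesis
  proof (cases "len > 0")
    case False
    then have "Mpart ms k0 - T \<le> 0" using TT unfolding len_def by auto
    show ?thesis
    proof (intro bexI[of _ "{}"] conjI ballI allI impI)
      fix \<omega> s assume "0 \<le> s \<and> s \<le> Mpart ms (ell ms T) - T \<and> s < T' - T"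
      then have "s = 0" using \<open>Mpart ms k0 - T \<le> 0\<close> unfolding k0_def by auto
      then show "\<bar>(tbar ms T + s) * X (ell ms T) (tbar ms T + s) \<omega> - tbar ms T * X (ell ms T) (tbar ms T) \<omega>\<bar> < \<epsilon>*T"
        using eps T0 by simp
    qed (use bnd0 in auto)
  next
    case True
    define E where "E = {\<omega>\<in>space M. ereal (\<epsilon>*T) \<le> Dsup X k0 r len \<omega>}"
    have Em: "E \<in> sets M" unfolding E_def using r True by (rule Dmeas)
    have "prob E \<le> C3 * (len/(\<epsilon>*T)) powr \<beta>" unfolding E_def using r True eps T0 by (intro S3) auto
    also have "\<dots> \<le> C3 * ((T'-T)/(\<epsilon>*T)) powr \<beta>"
      using True C3 eps T0 beta by (intro mult_left_mono powr_mono2 divide_right_mono) (auto simp: len_def)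
    also have "(T'-T)/(\<epsilon>*T) = (1/\<epsilon>) * ((T'-T)/T)" by simp
    also have "((1/\<epsilon>) * ((T'-T)/T)) powr \<beta> = (1/\<epsilon>) powr \<beta> * ((T'-T)/T) powr \<beta>"
      by (rule powr_mult; use eps T0 TT in auto)
    finally have PE: "prob E \<le> C3 * (1/\<epsilon>) powr \<beta> * ((T'-T)/T) powr \<beta>" by (simp add: mult.assoc)
    show ?thesis
    proof (intro bexI[OF _ Em] conjI PE ballI allI impI)
      fix \<omega> s assume \<omega>: "\<omega> \<in> space M - E" and s: "0 \<le> s \<and> s \<le> Mpart ms (ell ms T) - T \<and> s < T' - T"
      have "s \<le> len" using s unfolding len_def k0_def by auto
      then have "ereal \<bar>(r+s) * X k0 (r+s) \<omega> - r * X k0 r \<omega>\<bar> \<le> Dsup X k0 r len \<omega>"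
        using s by (intro Dsup_ge) auto
      also have "Dsup X k0 r len \<omega> < ereal (\<epsilon>*T)" using \<omega> unfolding E_def by auto
      finally show "\<bar>(tbar ms T + s) * X (ell ms T) (tbar ms T + s) \<omega> - tbar ms T * X (ell ms T) (tbar ms T) \<omega>\<bar> < \<epsilon>*T"
        unfolding r_def k0_def by simp
    qed
  qed
qed

lemma powr_lin:
  fixes x e :: real assumes "0 \<le> x" "x \<le> e"
  shows "x powr \<beta> \<le> x * e powr (\<beta>-1)"
proof (cases "x = 0")
  case True then show ?thesis by simp
next
  case False
  then have x: "x > 0" using assms by auto
  have "x powr \<beta> = x powr (1 + (\<beta>-1))" by simp
  also have "\<dots> = x * x powr (\<beta>-1)" by (subst powr_add) (use x in auto)
  also have "\<dots> \<le> x * e powr (\<beta>-1)" using x assms beta by (intro mult_left_mono powr_mono2) auto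
  finally show ?thesis .
qed

lemma part_last:
  fixes T T' \<epsilon> :: real
  assumes T0: "0 < T" and TT: "T < T'" and eps: "\<epsilon> > 0"
  shows "\<exists>E\<in>sets M. prob E \<le> C3 * (2/\<epsilon>) powr \<beta> * ((T'-T)/T) powr \<beta>
     \<and> (\<forall>\<omega>\<in>space M - E. \<forall>k u. Suc (ell ms T) \<le> k \<and> k \<le> ell ms T' \<and> 0 < u \<and> u \<le> ms k \<and> u < T' - Mpart ms (k-1)
          \<longrightarrow> \<bar>u * X k u \<omega>\<bar> \<le> \<epsilon>*T)"
proof -
  define k0 where "k0 = ell ms T"
  define k1 where "k1 = ell ms T'"
  define L where "L = {Suc k0..k1}"
  define len where "len k = min (ms k) (T' - Mpart ms (k-1))" for k
  have fL: "finite L" unfolding L_def by auto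
  have lenpos: "len k > 0" if "k \<in> L" for k
  proof -
    have "k - 1 < k1" "k \<ge> 1" using that unfolding L_def by auto
    then have "Mpart ms (k-1) < T'" unfolding k1_def by (simp add: ell_lt_iff)
    then show ?thesis using mpos \<open>k \<ge> 1\<close> unfolding len_def by auto
  qed
  define E where "E = (\<Union>k\<in>L. NZ k (len k) (\<epsilon>*T))"
  have Em: "E \<in> sets M" unfolding E_def using lenpos by (intro sets.finite_UN fL NZ_sets) auto
  define \<eta> where "\<eta> = (T'-T)/T"
  have \<eta>: "\<eta> > 0" unfolding \<eta>_def using TT T0 by auto
  have lensum: "sum len L \<le> T' - T"
  proof (cases "Suc k0 \<le> k1")
    case False then have "L = {}" unfolding L_def by auto
    then show ?thesis using TT by simp
  next
    case True
    then have Lins: "L = insert k1 {Suc k0..k1-1}" unfolding L_def by auto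
    have "k1 \<notin> {Suc k0..k1-1}" using True by auto
    then have a0: "sum len L = len k1 + sum len {Suc k0..k1-1}" unfolding Lins by simp
    have a1: "sum len {Suc k0..k1-1} \<le> sum ms {Suc k0..k1-1}" by (intro sum_mono) (auto simp: len_def)
    have a2: "sum ms {Suc k0..k1-1} = Mpart ms (k1-1) - Mpart ms k0" using True by (intro Mp_diff) auto
    have a3: "len k1 \<le> T' - Mpart ms (k1-1)" unfolding len_def by auto
    have a4: "T \<le> Mpart ms k0" unfolding k0_def by (rule ell_ge)
    show ?thesis using a0 a1 a2 a3 a4 by linarith
  qed
  have "prob E \<le> (\<Sum>k\<in>L. prob (NZ k (len k) (\<epsilon>*T)))"
    unfolding E_def using lenpos by (intro finite_measure_subadditive_finite fL) (auto intro: NZ_sets)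
  also have "\<dots> \<le> (\<Sum>k\<in>L. C3 * (2*len k/(\<epsilon>*T)) powr \<beta>)"
    using lenpos eps T0 by (intro sum_mono NZ_prob) auto
  also have "\<dots> = (\<Sum>k\<in>L. C3 * (2/\<epsilon>) powr \<beta> * (len k/T) powr \<beta>)"
  proof (intro sum.cong refl)
    fix k assume k: "k \<in> L"
    have "2*len k/(\<epsilon>*T) = (2/\<epsilon>) * (len k/T)" by simp
    moreover have "((2/\<epsilon>) * (len k/T)) powr \<beta> = (2/\<epsilon>) powr \<beta> * (len k/T) powr \<beta>"
      by (rule powr_mult; use eps T0 lenpos[OF k] in auto)
    ultimately show "C3 * (2*len k/(\<epsilon>*T)) powr \<beta> = C3 * (2/\<epsilon>) powr \<beta> * (len k/T) powr \<beta>" by simp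
  qed
  also have "\<dots> = C3 * (2/\<epsilon>) powr \<beta> * (\<Sum>k\<in>L. (len k/T) powr \<beta>)" by (simp add: sum_distrib_left)
  also have "(\<Sum>k\<in>L. (len k/T) powr \<beta>) \<le> (\<Sum>k\<in>L. (len k/T) * \<eta> powr (\<beta>-1))"
  proof (intro sum_mono powr_lin)
    fix k assume k: "k \<in> L"
    show "0 \<le> len k / T" using lenpos[OF k] T0 by auto
    have "len k \<le> sum len L" using fL lenpos k by (intro member_le_sum) (auto simp: less_imp_le)
    then show "len k / T \<le> \<eta>" unfolding \<eta>_def using lensum T0 by (intro divide_right_mono) auto
  qed
  also have "\<dots> = (sum len L / T) * \<eta> powr (\<beta>-1)" by (simp add: sum_distrib_right sum_divide_distrib)
  also have "\<dots> \<le> \<eta> * \<eta> powr (\<beta>-1)"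
    unfolding \<eta>_def using lensum T0 by (intro mult_right_mono divide_right_mono) auto
  also have "\<eta> * \<eta> powr (\<beta>-1) = \<eta> powr \<beta>"
  proof -
    have "\<eta> powr \<beta> = \<eta> powr (1 + (\<beta>-1))" by simp
    also have "\<dots> = \<eta> * \<eta> powr (\<beta>-1)" by (subst powr_add) (use \<eta> in auto)
    finally show ?thesis by simp
  qed
  finally have PE: "prob E \<le> C3 * (2/\<epsilon>) powr \<beta> * ((T'-T)/T) powr \<beta>"
    unfolding \<eta>_def using C3 by (simp add: mult_left_mono)
  show ?thesis
  proof (intro bexI[OF _ Em] conjI PE ballI allI impI)
    fix \<omega> k u assume \<omega>: "\<omega> \<in> space M - E"
      and ku: "Suc (ell ms T) \<le> k \<and> k \<le> ell ms T' \<and> 0 < u \<and> u \<le> ms k \<and> u < T' - Mpart ms (k-1)"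
    then have k: "k \<in> L" unfolding L_def k0_def k1_def by auto
    have "u \<le> len k" using ku unfolding len_def by auto
    moreover have "\<omega> \<notin> NZ k (len k) (\<epsilon>*T)" using \<omega> k unfolding E_def by auto
    ultimately show "\<bar>u * X k u \<omega>\<bar> \<le> \<epsilon>*T"
      using \<omega> ku lenpos[OF k] eps T0 by (intro NZ_prop) auto
  qed
qed

end


context slln begin

lemma step:
  fixes T T' \<epsilon> a Cc :: real
  assumes T: "1 \<le> T" and TT: "T < T'" "T' - T \<le> T" and eps: "\<epsilon> > 0" and a: "0 < a" "a < 1"
   and Se: "\<And>k m. m>0 \<Longrightarrow> prob {\<omega>\<in>space M. \<epsilon> < \<bar>X k m \<omega>\<bar>} \<le> Cc * m powr -\<delta>"
  shows "\<exists>B\<in>sets M. prob B \<le> 2 * ((Atl + A2c/\<epsilon>^2) * T powr ((a-1)*(\<beta>-1)) + Cc * T powr (1-a-a*\<delta>))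
            + C3 * (1/\<epsilon>) powr \<beta> * ((T'-T)/T) powr \<beta> + C3 * (2/\<epsilon>) powr \<beta> * ((T'-T)/T) powr \<beta>
     \<and> (\<forall>\<omega>\<in>space M - B. \<forall>t. T \<le> t \<and> t < T' \<longrightarrow>
          \<bar>t * St X ms t \<omega>\<bar> \<le> 6*\<epsilon>*T + 2*A1c*T*T powr ((a-1)*(\<beta>-1)) + K0*(T'-T))"
proof -
  have T0: "T > 0" using T by auto
  define Tb where "Tb = T powr ((a-1)*(\<beta>-1))"
  define b1 where "b1 = (Atl + A2c/\<epsilon>^2) * T powr ((a-1)*(\<beta>-1)) + Cc * T powr (1-a-a*\<delta>)"
  obtain E1 where E1: "E1 \<in> sets M" "prob E1 \<le> b1"
    and P1: "\<And>\<omega>. \<omega>\<in>space M - E1 \<Longrightarrow> \<bar>T * St X ms T \<omega>\<bar> \<le> 2*\<epsilon>*T + A1c*T*Tb"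
    using part_F[OF T eps a Se] unfolding b1_def Tb_def by blast
  obtain E4 where E4: "E4 \<in> sets M" "prob E4 \<le> b1"
    and P4: "\<And>\<omega>. \<omega>\<in>space M - E4 \<Longrightarrow> (\<Sum>k\<in>{Suc (ell ms T)..<ell ms T'}. ms k * \<bar>X k (ms k) \<omega>\<bar>)
          \<le> K0*(T'-T) + 2*\<epsilon>*T + A1c*T*Tb"
    using part_mid[OF T TT eps a Se] unfolding b1_def Tb_def by blast
  obtain E2 where E2: "E2 \<in> sets M" "prob E2 \<le> C3 * (1/\<epsilon>) powr \<beta> * ((T'-T)/T) powr \<beta>"
    and P2: "\<And>\<omega> s. \<omega>\<in>space M - E2 \<Longrightarrow> 0 \<le> s \<and> s \<le> Mpart ms (ell ms T) - T \<and> s < T' - T \<Longrightarrow>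
          \<bar>(tbar ms T + s) * X (ell ms T) (tbar ms T + s) \<omega> - tbar ms T * X (ell ms T) (tbar ms T) \<omega>\<bar> < \<epsilon>*T"
    using part_first[OF T0 TT(1) eps] by blast
  obtain E3 where E3: "E3 \<in> sets M" "prob E3 \<le> C3 * (2/\<epsilon>) powr \<beta> * ((T'-T)/T) powr \<beta>"
    and P3: "\<And>\<omega> k u. \<omega>\<in>space M - E3 \<Longrightarrow> Suc (ell ms T) \<le> k \<and> k \<le> ell ms T' \<and> 0 < u \<and> u \<le> ms k \<and> u < T' - Mpart ms (k-1)
          \<Longrightarrow> \<bar>u * X k u \<omega>\<bar> \<le> \<epsilon>*T"
    using part_last[OF T0 TT(1) eps] by blast
  define B where "B = E1 \<union> E2 \<union> E3 \<union> E4"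
  have Bm: "B \<in> sets M" unfolding B_def using E1 E2 E3 E4 by auto
  have PB: "prob B \<le> 2 * b1 + C3 * (1/\<epsilon>) powr \<beta> * ((T'-T)/T) powr \<beta> + C3 * (2/\<epsilon>) powr \<beta> * ((T'-T)/T) powr \<beta>"
  proof -
    have "prob B \<le> prob (E1 \<union> E2 \<union> E3) + prob E4" unfolding B_def using E1 E2 E3 E4 by (intro measure_Un_le) auto
    also have "prob (E1 \<union> E2 \<union> E3) \<le> prob (E1 \<union> E2) + prob E3" using E1 E2 E3 by (intro measure_Un_le) auto
    also have "prob (E1 \<union> E2) \<le> prob E1 + prob E2" using E1 E2 by (intro measure_Un_le) auto
    finally show ?thesis using E1 E2 E3 E4 by linarith
  qed
  show ?thesis
  proof (intro bexI[OF _ Bm] conjI ballI allI impI)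
    show "prob B \<le> 2 * ((Atl + A2c/\<epsilon>^2) * T powr ((a-1)*(\<beta>-1)) + Cc * T powr (1-a-a*\<delta>))
            + C3 * (1/\<epsilon>) powr \<beta> * ((T'-T)/T) powr \<beta> + C3 * (2/\<epsilon>) powr \<beta> * ((T'-T)/T) powr \<beta>"
      using PB unfolding b1_def .
    fix \<omega> t assume \<omega>: "\<omega> \<in> space M - B" and t: "T \<le> t \<and> t < T'"
    have \<omega>1: "\<omega> \<in> space M - E1" and \<omega>2: "\<omega> \<in> space M - E2" and \<omega>3: "\<omega> \<in> space M - E3" and \<omega>4: "\<omega> \<in> space M - E4"
      using \<omega> unfolding B_def by auto
    have t0: "t > 0" using t T0 by auto
    define G where "G k u = u * X k u \<omega>" for k u
    have Ft: "t * St X ms t \<omega> = FF G t" unfolding FF_def G_def using F_repr[OF t0] by simp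
    have FT: "T * St X ms T \<omega> = FF G T" unfolding FF_def G_def using F_repr[OF T0] by simp
    define k0 where "k0 = ell ms T"
    define l where "l = ell ms t"
    have k0l: "k0 \<le> l" unfolding k0_def l_def using t by (intro ell_mono) auto
    have lk1: "l \<le> ell ms T'" unfolding l_def using t by (intro ell_mono) auto
    have K0n: "K0 * (T'-T) \<ge> 0" using K0_nonneg TT by auto
    have A1n: "A1c*T*Tb \<ge> 0" using consts_nonneg T0 unfolding Tb_def by auto
    have diff: "\<bar>FF G t - FF G T\<bar> \<le> 4*\<epsilon>*T + A1c*T*Tb + K0*(T'-T)"
    proof (cases "l = k0")
      case True
      have e: "FF G t - FF G T = G k0 (tbar ms T + (t - T)) - G k0 (tbar ms T)"
        using decomp_same[OF T0 _ True[unfolded l_def k0_def]] t unfolding k0_def by auto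
      have "t \<le> Mpart ms k0" using ell_ge[of t] True unfolding l_def by simp
      then have "\<bar>G k0 (tbar ms T + (t - T)) - G k0 (tbar ms T)\<bar> < \<epsilon>*T"
        unfolding G_def k0_def using P2[OF \<omega>2, of "t - T"] t k0_def by auto
      then show ?thesis using e K0n A1n eps T0 by auto
    next
      case False
      then have lt: "k0 < l" using k0l by auto
      have e: "FF G t - FF G T = (G k0 (ms k0) - G k0 (tbar ms T))
          + (\<Sum>k\<in>{Suc k0..<l}. G k (ms k)) + G l (tbar ms t)"
        using decomp_diff[OF T0 _ lt[unfolded l_def k0_def]] t unfolding k0_def l_def by auto
      have d1: "\<bar>G k0 (ms k0) - G k0 (tbar ms T)\<bar> < \<epsilon>*T"
      proof -
        have mk0: "ms k0 = tbar ms T + (Mpart ms k0 - T)"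
          using Mp_ell[OF T0] unfolding tbar_def k0_def by simp
        have "Mpart ms k0 < t" using lt unfolding l_def by (simp add: ell_lt_iff)
        moreover have "T \<le> Mpart ms k0" unfolding k0_def by (rule ell_ge)
        ultimately show ?thesis unfolding G_def mk0 using P2[OF \<omega>2, of "Mpart ms k0 - T"] t unfolding k0_def by auto
      qed
      have d2: "\<bar>\<Sum>k\<in>{Suc k0..<l}. G k (ms k)\<bar> \<le> K0*(T'-T) + 2*\<epsilon>*T + A1c*T*Tb"
      proof -
        have "\<bar>\<Sum>k\<in>{Suc k0..<l}. G k (ms k)\<bar> \<le> (\<Sum>k\<in>{Suc k0..<l}. \<bar>G k (ms k)\<bar>)" by (rule sum_abs)
        also have "\<dots> = (\<Sum>k\<in>{Suc k0..<l}. ms k * \<bar>X k (ms k) \<omega>\<bar>)"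
        proof (intro sum.cong refl)
          fix k assume "k \<in> {Suc k0..<l}"
          then have "ms k > 0" using mpos by auto
          then show "\<bar>G k (ms k)\<bar> = ms k * \<bar>X k (ms k) \<omega>\<bar>" unfolding G_def by (simp add: abs_mult)
        qed
        also have "\<dots> \<le> (\<Sum>k\<in>{Suc (ell ms T)..<ell ms T'}. ms k * \<bar>X k (ms k) \<omega>\<bar>)"
        proof (intro sum_mono2)
          show "{Suc k0..<l} \<subseteq> {Suc (ell ms T)..<ell ms T'}" using lk1 unfolding k0_def by auto
          fix b assume "b \<in> {Suc (ell ms T)..<ell ms T'} - {Suc k0..<l}"
          then have "ms b > 0" using mpos by auto
          then show "0 \<le> ms b * \<bar>X b (ms b) \<omega>\<bar>" by simp
        qed simp
        also have "\<dots> \<le> K0*(T'-T) + 2*\<epsilon>*T + A1c*T*Tb" by (rule P4[OF \<omega>4])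
        finally show ?thesis .
      qed
      have d3: "\<bar>G l (tbar ms t)\<bar> \<le> \<epsilon>*T"
      proof -
        have "0 < tbar ms t" "tbar ms t \<le> ms l" using tb_pos[OF t0] tb_le[OF t0] unfolding l_def by auto
        moreover have "tbar ms t < T' - Mpart ms (l-1)" using t unfolding tbar_def l_def by auto
        ultimately show ?thesis unfolding G_def using P3[OF \<omega>3, of l "tbar ms t"] lt lk1 unfolding k0_def by auto
      qed
      show ?thesis unfolding e using d1 d2 d3 by linarith
    qed
    have "\<bar>t * St X ms t \<omega>\<bar> \<le> \<bar>T * St X ms T \<omega>\<bar> + \<bar>FF G t - FF G T\<bar>" unfolding Ft FT by linarith
    also have "\<dots> \<le> (2*\<epsilon>*T + A1c*T*Tb) + (4*\<epsilon>*T + A1c*T*Tb + K0*(T'-T))"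
      using P1[OF \<omega>1] diff by linarith
    finally show "\<bar>t * St X ms t \<omega>\<bar> \<le> 6*\<epsilon>*T + 2*A1c*T*T powr ((a-1)*(\<beta>-1)) + K0*(T'-T)"
      unfolding Tb_def by linarith
  qed
qed

end


lemma exp_minus_one_le: fixes x :: real shows "exp x - 1 \<le> x * exp x"
proof -
  have "1 + (-x) \<le> exp (-x)" by (rule exp_ge_add_one_self)
  then have "(1 - x) * exp x \<le> exp (-x) * exp x" by (intro mult_right_mono) auto
  also have "exp (-x) * exp x = 1" by (simp add: exp_minus field_simps)
  finally show ?thesis by (simp add: algebra_simps)
qed

lemma ratio_bound:
  fixes p :: real and j :: nat assumes p: "p \<ge> 1"
  shows "((real j + 2)/(real j + 1)) powr p - 1 \<le> p * exp p / (real j + 1)"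
proof -
  define y where "y = 1/(real j + 1)"
  have y: "0 < y" "y \<le> 1" unfolding y_def by (auto simp: field_simps)
  have "(real j + 2)/(real j + 1) = 1 + y" unfolding y_def by (simp add: field_simps)
  then have "((real j + 2)/(real j + 1)) powr p = exp (p * ln (1 + y))"
    using y by (simp add: powr_def)
  also have "\<dots> \<le> exp (p * y)" using y p by (intro exp_le_cancel_iff[THEN iffD2] mult_left_mono ln_add_one_self_le_self) auto
  finally have "((real j + 2)/(real j + 1)) powr p - 1 \<le> exp (p*y) - 1" by simp
  also have "\<dots> \<le> (p*y) * exp (p*y)" by (rule exp_minus_one_le)
  also have "\<dots> \<le> (p*y) * exp p" using y p by (intro mult_left_mono) (auto simp: mult_le_cancel_left1)
  finally show ?thesis unfolding y_def by simp
qed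

lemma find_interval:
  fixes \<tau> :: "nat \<Rightarrow> real"
  assumes mono: "mono \<tau>" and unb: "\<And>n. real n \<le> \<tau> n" and t: "\<tau> J \<le> t"
  shows "\<exists>j\<ge>J. \<tau> j \<le> t \<and> t < \<tau> (Suc j)"
proof -
  obtain n :: nat where n: "t < real n" using reals_Archimedean2 by blast
  then have ex: "\<exists>n. t < \<tau> n" using unb by (meson less_le_trans)
  define N where "N = (LEAST n. t < \<tau> n)"
  have N: "t < \<tau> N" unfolding N_def by (rule LeastI_ex[OF ex])
  have JN: "J < N"
  proof (rule ccontr)
    assume "\<not> J < N"
    then have "\<tau> N \<le> \<tau> J" using mono by (auto simp: mono_def)
    then show False using N t by linarith
  qed
  then obtain j where j: "N = Suc j" by (cases N) auto
  have "\<not> t < \<tau> j" using not_less_Least[of j "\<lambda>n. t < \<tau> n"] j unfolding N_def by auto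
  then show ?thesis using j N JN by (intro exI[of _ j]) auto
qed

lemma filterlim_plus1: "filterlim (\<lambda>j::nat. real j + 1) at_top sequentially"
proof -
  have "filterlim (\<lambda>j::nat. 1 + real j) at_top sequentially"
    by (rule filterlim_tendsto_add_at_top[OF tendsto_const filterlim_real_sequentially])
  then show ?thesis by (simp add: add.commute)
qed

context slln begin

lemma eventually_small:
  fixes \<epsilon> :: real assumes eps: "\<epsilon> > 0"
  shows "AE \<omega> in M. eventually (\<lambda>t. \<bar>St X ms t \<omega>\<bar> \<le> 8*\<epsilon>) at_top"
proof -
  obtain Cc where Se: "\<And>k m. m > 0 \<Longrightarrow> prob {\<omega>\<in>space M. \<epsilon> < \<bar>X k m \<omega>\<bar>} \<le> Cc * m powr -\<delta>"
    using S1[OF eps] by blast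
  have Cc0: "Cc \<ge> 0"
  proof -
    have "prob {\<omega>\<in>space M. \<epsilon> < \<bar>X 0 1 \<omega>\<bar>} \<le> Cc" using Se[of 1 0] by simp
    then show ?thesis using measure_nonneg[of M "{\<omega>\<in>space M. \<epsilon> < \<bar>X 0 1 \<omega>\<bar>}"] by linarith
  qed
  define a where "a = (2+\<delta>)/(2*(1+\<delta>))"
  have a: "0 < a" "a < 1" unfolding a_def using delta by (auto simp: field_simps)
  define \<kappa>1 where "\<kappa>1 = (1-a)*(\<beta>-1)"
  define \<kappa>2 where "\<kappa>2 = a + a*\<delta> - 1"
  have k1: "\<kappa>1 > 0" unfolding \<kappa>1_def using a beta by auto
  have k2: "\<kappa>2 > 0"
  proof -
    have d1: "1+\<delta> \<noteq> 0" using delta by simp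
    have "a*(1+\<delta>) = (2+\<delta>)*(1+\<delta>)/(2*(1+\<delta>))" unfolding a_def by simp
    also have "\<dots> = (2+\<delta>)/2" using d1 by (rule mult_divide_mult_cancel_right)
    finally have "a + a*\<delta> = (2+\<delta>)/2" by (simp add: algebra_simps)
    then show ?thesis unfolding \<kappa>2_def using delta by simp
  qed
  have e1: "(a-1)*(\<beta>-1) = -\<kappa>1" unfolding \<kappa>1_def by (simp add: algebra_simps)
  have e2: "1-a-a*\<delta> = -\<kappa>2" unfolding \<kappa>2_def by (simp add: algebra_simps)
  define p where "p = 2/\<kappa>1 + 2/\<kappa>2 + 1"
  have p1: "p \<ge> 1" unfolding p_def using k1 k2 by auto
  have pk1: "p * \<kappa>1 \<ge> 2"
  proof -
    have "p * \<kappa>1 = 2 + (2/\<kappa>2 + 1) * \<kappa>1" unfolding p_def using k1 by (simp add: field_simps)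
    then show ?thesis using k1 k2 by (smt (verit) divide_pos_pos mult_pos_pos)
  qed
  have pk2: "p * \<kappa>2 \<ge> 2"
  proof -
    have "p * \<kappa>2 = 2 + (2/\<kappa>1 + 1) * \<kappa>2" unfolding p_def using k2 by (simp add: field_simps)
    then show ?thesis using k1 k2 by (smt (verit) divide_pos_pos mult_pos_pos)
  qed
  define \<tau> where "\<tau> j = (real j + 1) powr p" for j :: nat
  have \<tau>1: "\<tau> j \<ge> real j + 1" for j
  proof -
    have "(real j + 1) powr 1 \<le> (real j + 1) powr p" using p1 by (intro powr_mono) auto
    then show ?thesis unfolding \<tau>_def by simp
  qed
  have \<tau>mono: "mono \<tau>" unfolding mono_def \<tau>_def using p1 by (auto intro!: powr_mono2)
  have \<tau>inc: "\<tau> j < \<tau> (Suc j)" for j unfolding \<tau>_def using p1 by (auto intro!: powr_less_mono2)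
  define \<eta> where "\<eta> j = (\<tau> (Suc j) - \<tau> j) / \<tau> j" for j
  define c where "c = p * exp p"
  have \<eta>pos: "\<eta> j > 0" for j unfolding \<eta>_def using \<tau>inc[of j] \<tau>1[of j] by auto
  have \<eta>bound: "\<eta> j \<le> c / (real j + 1)" for j
  proof -
    have "\<eta> j = \<tau> (Suc j) / \<tau> j - 1" unfolding \<eta>_def using \<tau>1[of j] by (simp add: diff_divide_distrib)
    also have "\<tau> (Suc j) / \<tau> j = ((real j + 2)/(real j + 1)) powr p"
      unfolding \<tau>_def by (simp add: powr_divide add.commute)
    finally show ?thesis unfolding c_def using ratio_bound[OF p1, of j] by simp
  qed
  have taupow: "\<tau> j powr (-\<kappa>) \<le> (real j + 1) powr (-2)" if "\<kappa> > 0" "p*\<kappa> \<ge> 2" for j \<kappa>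
  proof -
    have "\<tau> j powr (-\<kappa>) = (real j + 1) powr (-(p*\<kappa>))" unfolding \<tau>_def by (simp add: powr_powr)
    also have "\<dots> \<le> (real j + 1) powr (-2)" using that by (intro powr_mono) auto
    finally show ?thesis .
  qed
  define D1 where "D1 = 2*((Atl + A2c/\<epsilon>^2) + Cc)"
  define D2 where "D2 = (C3 * (1/\<epsilon>) powr \<beta> + C3 * (2/\<epsilon>) powr \<beta>) * c powr \<beta>"
  define bnd where "bnd j = D1 * (real (Suc j)) powr (-2) + D2 * (real (Suc j)) powr (-\<beta>)" for j
  have sbnd: "summable bnd"
  proof -
    have s1: "summable (\<lambda>n. real n powr (-2))" and s2: "summable (\<lambda>n. real n powr (-\<beta>))"
      using beta by (auto simp: summable_real_powr_iff)
    have "summable (\<lambda>j. real (Suc j) powr (-2))"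
      by (rule summable_Suc_iff[where f="\<lambda>n. real n powr (-2)", THEN iffD2, OF s1])
    moreover have "summable (\<lambda>j. real (Suc j) powr (-\<beta>))"
      by (rule summable_Suc_iff[where f="\<lambda>n. real n powr (-\<beta>)", THEN iffD2, OF s2])
    ultimately have "summable (\<lambda>j. real (Suc j) powr (-2))" "summable (\<lambda>j. real (Suc j) powr (-\<beta>))" by auto
    then show ?thesis unfolding bnd_def by (intro summable_add summable_mult)
  qed
  have lim1: "(\<lambda>j. c / (real j + 1)) \<longlonglongrightarrow> 0"
    by (intro real_tendsto_divide_at_top[OF tendsto_const] filterlim_plus1)
  have lim2: "(\<lambda>j. (real j + 1) powr (-2)) \<longlonglongrightarrow> 0"
    by (rule tendsto_neg_powr[OF _ filterlim_plus1]) simp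
  have ev1: "eventually (\<lambda>j. c / (real j + 1) < min 1 (\<epsilon> / (K0 + 1))) sequentially"
    using K0_nonneg eps by (intro order_tendstoD(2)[OF lim1]) auto
  have ev2: "eventually (\<lambda>j. (real j + 1) powr (-2) < \<epsilon> / (2*A1c + 1)) sequentially"
    using consts_nonneg eps by (intro order_tendstoD(2)[OF lim2]) auto
  obtain J where J: "\<And>j. j \<ge> J \<Longrightarrow> c / (real j + 1) < min 1 (\<epsilon> / (K0 + 1)) \<and> (real j + 1) powr (-2) < \<epsilon> / (2*A1c + 1)"
    using eventually_conj[OF ev1 ev2] by (auto simp: eventually_sequentially)
  have stepj: "\<exists>B. B \<in> sets M \<and> (J \<le> j \<longrightarrow> prob B \<le> bnd j \<and>
      (\<forall>\<omega>\<in>space M - B. \<forall>t. \<tau> j \<le> t \<and> t < \<tau> (Suc j) \<longrightarrow> \<bar>St X ms t \<omega>\<bar> \<le> 8*\<epsilon>))" for j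
  proof (cases "J \<le> j")
    case False then show ?thesis by (intro exI[of _ "{}"]) auto
  next
    case True
    note Jj = J[OF True]
    define T where "T = \<tau> j"
    define T' where "T' = \<tau> (Suc j)"
    have T: "1 \<le> T" unfolding T_def using \<tau>1[of j] by simp
    have TT: "T < T'" unfolding T_def T'_def by (rule \<tau>inc)
    have \<eta>T: "T' - T = \<eta> j * T" unfolding \<eta>_def T_def T'_def using \<tau>1[of j] by simp
    have \<eta>le: "\<eta> j \<le> c / (real j + 1)" by (rule \<eta>bound)
    have \<eta>1: "\<eta> j \<le> 1" using \<eta>le Jj by linarith
    have TT2: "T' - T \<le> T" unfolding \<eta>T using \<eta>1 T by (simp add: mult_le_cancel_right1)
    obtain B where B: "B \<in> sets M"
      and PB: "prob B \<le> 2 * ((Atl + A2c/\<epsilon>^2) * T powr ((a-1)*(\<beta>-1)) + Cc * T powr (1-a-a*\<delta>))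
            + C3 * (1/\<epsilon>) powr \<beta> * ((T'-T)/T) powr \<beta> + C3 * (2/\<epsilon>) powr \<beta> * ((T'-T)/T) powr \<beta>"
      and PP: "\<And>\<omega> t. \<omega>\<in>space M - B \<Longrightarrow> T \<le> t \<and> t < T' \<Longrightarrow>
          \<bar>t * St X ms t \<omega>\<bar> \<le> 6*\<epsilon>*T + 2*A1c*T*T powr ((a-1)*(\<beta>-1)) + K0*(T'-T)"
      using step[OF T TT TT2 eps a Se] by blast
    have r1: "T powr ((a-1)*(\<beta>-1)) \<le> (real (Suc j)) powr (-2)"
      unfolding e1 T_def using taupow[OF k1 pk1, of j] by (simp add: add.commute)
    have r2: "T powr (1-a-a*\<delta>) \<le> (real (Suc j)) powr (-2)"
      unfolding e2 T_def using taupow[OF k2 pk2, of j] by (simp add: add.commute)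
    have r3: "((T'-T)/T) powr \<beta> \<le> c powr \<beta> * (real (Suc j)) powr (-\<beta>)"
    proof -
      have "(T'-T)/T = \<eta> j" unfolding \<eta>T using T by simp
      then have "((T'-T)/T) powr \<beta> \<le> (c / (real j + 1)) powr \<beta>"
        using \<eta>le \<eta>pos[of j] beta by (auto intro!: powr_mono2)
      also have "\<dots> = c powr \<beta> / (real j + 1) powr \<beta>"
        by (rule powr_divide; use p1 in \<open>auto simp: c_def\<close>)
      also have "\<dots> = c powr \<beta> * (real (Suc j)) powr (-\<beta>)"
        by (simp add: powr_minus divide_inverse add.commute)
      finally show ?thesis .
    qed
    have cst: "Atl + A2c/\<epsilon>^2 \<ge> 0" using consts_nonneg by auto
    have PB2: "prob B \<le> bnd j"
    proof -
      have "2 * ((Atl + A2c/\<epsilon>^2) * T powr ((a-1)*(\<beta>-1)) + Cc * T powr (1-a-a*\<delta>))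
          \<le> 2 * ((Atl + A2c/\<epsilon>^2) * (real (Suc j)) powr (-2) + Cc * (real (Suc j)) powr (-2))"
        using r1 r2 cst Cc0 by (intro mult_left_mono add_mono) auto
      moreover have "C3 * (1/\<epsilon>) powr \<beta> * ((T'-T)/T) powr \<beta> + C3 * (2/\<epsilon>) powr \<beta> * ((T'-T)/T) powr \<beta>
          \<le> C3 * (1/\<epsilon>) powr \<beta> * (c powr \<beta> * (real (Suc j)) powr (-\<beta>)) + C3 * (2/\<epsilon>) powr \<beta> * (c powr \<beta> * (real (Suc j)) powr (-\<beta>))"
        using r3 C3 by (intro add_mono mult_left_mono) auto
      ultimately show ?thesis using PB unfolding bnd_def D1_def D2_def by (simp add: algebra_simps)
    qed
    show ?thesis
    proof (intro exI[of _ B] conjI impI B PB2 ballI allI)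
      fix \<omega> t assume \<omega>: "\<omega> \<in> space M - B" and t: "\<tau> j \<le> t \<and> t < \<tau> (Suc j)"
      have tT: "T \<le> t \<and> t < T'" using t unfolding T_def T'_def .
      have bnd1: "2*A1c*T*T powr ((a-1)*(\<beta>-1)) \<le> \<epsilon> * T"
      proof -
        have "2*A1c * T powr ((a-1)*(\<beta>-1)) \<le> 2*A1c * (real (Suc j)) powr (-2)"
          using r1 consts_nonneg by (intro mult_left_mono) auto
        also have "\<dots> \<le> (2*A1c + 1) * (\<epsilon> / (2*A1c + 1))"
          using Jj consts_nonneg by (intro mult_mono) (auto simp: add.commute less_imp_le)
        also have "\<dots> = \<epsilon>" using consts_nonneg by (simp add: field_simps)
        finally show ?thesis using T by (simp add: mult.commute mult.left_commute mult_right_mono)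
      qed
      have bnd2: "K0*(T'-T) \<le> \<epsilon> * T"
      proof -
        have "K0 * \<eta> j \<le> (K0 + 1) * (\<epsilon> / (K0 + 1))"
          using \<eta>le Jj K0_nonneg \<eta>pos[of j] by (intro mult_mono) auto
        also have "\<dots> = \<epsilon>" using K0_nonneg by (simp add: field_simps)
        finally show ?thesis unfolding \<eta>T using T by (simp add: mult.assoc[symmetric] mult_right_mono)
      qed
      have "\<bar>t * St X ms t \<omega>\<bar> \<le> 8*\<epsilon>*T" using PP[OF \<omega> tT] bnd1 bnd2 by linarith
      also have "\<dots> \<le> 8*\<epsilon>*t" using tT eps by (intro mult_left_mono) auto
      finally have "t * \<bar>St X ms t \<omega>\<bar> \<le> t * (8*\<epsilon>)" using tT T by (simp add: abs_mult)
      then show "\<bar>St X ms t \<omega>\<bar> \<le> 8*\<epsilon>" using tT T by (simp add: mult_le_cancel_left_pos)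
    qed
  qed
  obtain Bf where Bf0: "\<forall>j. Bf j \<in> sets M \<and> (J \<le> j \<longrightarrow> prob (Bf j) \<le> bnd j \<and>
      (\<forall>\<omega>\<in>space M - Bf j. \<forall>t. \<tau> j \<le> t \<and> t < \<tau> (Suc j) \<longrightarrow> \<bar>St X ms t \<omega>\<bar> \<le> 8*\<epsilon>))"
  proof -
    have "\<forall>j. \<exists>B. B \<in> sets M \<and> (J \<le> j \<longrightarrow> prob B \<le> bnd j \<and>
      (\<forall>\<omega>\<in>space M - B. \<forall>t. \<tau> j \<le> t \<and> t < \<tau> (Suc j) \<longrightarrow> \<bar>St X ms t \<omega>\<bar> \<le> 8*\<epsilon>))"
      using stepj by (intro allI)
    from choice[OF this] show ?thesis using that by (elim exE) 
  qed
  have Bf: "\<And>j. Bf j \<in> sets M" "\<And>j. J \<le> j \<Longrightarrow> prob (Bf j) \<le> bnd j"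
    "\<And>j \<omega> t. J \<le> j \<Longrightarrow> \<omega>\<in>space M - Bf j \<Longrightarrow> \<tau> j \<le> t \<and> t < \<tau> (Suc j) \<Longrightarrow> \<bar>St X ms t \<omega>\<bar> \<le> 8*\<epsilon>"
    using Bf0 by blast+
  define Bs where "Bs j = (if J \<le> j then Bf j else {})" for j
  have Bsm: "Bs j \<in> sets M" for j unfolding Bs_def using Bf by auto
  have "summable (\<lambda>j. measure M (Bs j))"
  proof (rule summable_comparison_test'[OF sbnd])
    fix j :: nat assume "j \<ge> J"
    then show "norm (measure M (Bs j)) \<le> bnd j" unfolding Bs_def using Bf by auto
  qed
  then have AEB: "AE \<omega> in M. eventually (\<lambda>j. \<omega> \<in> space M - Bs j) sequentially"
    using Bsm by (intro borel_cantelli_AE1) (auto simp: emeasure_eq_measure)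
  show ?thesis
  proof (rule AE_mp[OF AEB], intro AE_I2 impI)
    fix \<omega> assume \<omega>: "\<omega> \<in> space M" and ev: "eventually (\<lambda>j. \<omega> \<in> space M - Bs j) sequentially"
    then obtain J1 where J1: "\<And>j. j \<ge> J1 \<Longrightarrow> \<omega> \<in> space M - Bs j" by (auto simp: eventually_sequentially)
    define J2 where "J2 = max J J1"
    show "eventually (\<lambda>t. \<bar>St X ms t \<omega>\<bar> \<le> 8*\<epsilon>) at_top"
      unfolding eventually_at_top_linorder
    proof (intro exI[of _ "\<tau> J2"] allI impI)
      fix t assume t: "t \<ge> \<tau> J2"
      obtain j where j: "j \<ge> J2" "\<tau> j \<le> t" "t < \<tau> (Suc j)"
        using find_interval[OF \<tau>mono _ t] \<tau>1 by (metis add_increasing2 zero_le_one le_add1 order_trans[OF _ \<tau>1] of_nat_le_iff le_refl le_diff_eq)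
      have "\<omega> \<in> space M - Bf j" using J1[of j] j unfolding Bs_def J2_def by auto
      then show "\<bar>St X ms t \<omega>\<bar> \<le> 8*\<epsilon>" using Bf(3)[of j \<omega> t] j unfolding J2_def by auto
    qed
  qed
qed

end


context slln begin

lemma main: "AE \<omega> in M. ((\<lambda>t. St X ms t \<omega>) \<longlongrightarrow> 0) at_top"
proof -
  have "\<forall>n::nat. AE \<omega> in M. eventually (\<lambda>t. \<bar>St X ms t \<omega>\<bar> \<le> 8 * (1 / (real n + 1))) at_top"
    by (intro allI eventually_small) auto
  then have "AE \<omega> in M. \<forall>n::nat. eventually (\<lambda>t. \<bar>St X ms t \<omega>\<bar> \<le> 8 * (1 / (real n + 1))) at_top"
    by (simp add: AE_all_countable)
  then show ?thesis
  proof (rule AE_mp, intro AE_I2 impI)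
    fix \<omega> assume H: "\<forall>n::nat. eventually (\<lambda>t. \<bar>St X ms t \<omega>\<bar> \<le> 8 * (1 / (real n + 1))) at_top"
    show "((\<lambda>t. St X ms t \<omega>) \<longlongrightarrow> 0) at_top"
    proof (rule tendstoI)
      fix e :: real assume e: "e > 0"
      obtain n :: nat where n: "8 / e < real n" using reals_Archimedean2 by blast
      have "8 * (1 / (real n + 1)) < e"
      proof -
        have "8 < e * real n" using n e by (simp add: field_simps)
        also have "\<dots> < e * (real n + 1)" using e by simp
        finally show ?thesis using e by (simp add: field_simps)
      qed
      then show "eventually (\<lambda>t. dist (St X ms t \<omega>) 0 < e) at_top"
        using H[rule_format, of n] by (auto elim!: eventually_mono)
    qed
  qed
qed

end

lemma count_ind: "(\<Sum>n. indicator {real n<..} x :: ennreal) = ennreal (real (nat \<lceil>x\<rceil>))"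
proof -
  have "(\<Sum>n. indicator {real n<..} x :: ennreal) = (\<Sum>n\<in>{..<nat \<lceil>x\<rceil>}. indicator {real n<..} x)"
  proof (rule suminf_finite)
    fix n assume "n \<notin> {..<nat \<lceil>x\<rceil>}"
    then have "x \<le> real n" by (auto simp: not_less nat_le_iff ceiling_le_iff)
    then show "(indicator {real n<..} x :: ennreal) = 0" by auto
  qed simp
  also have "\<dots> = (\<Sum>n\<in>{..<nat \<lceil>x\<rceil>}. (1::ennreal))"
  proof (intro sum.cong refl)
    fix n assume "n \<in> {..<nat \<lceil>x\<rceil>}"
    then have "int n < \<lceil>x\<rceil>" by auto
    then have "of_int (int n) < x" by (simp only: less_ceiling_iff)
    then have "real n < x" by simp
    then show "(indicator {real n<..} x :: ennreal) = 1" by auto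
  qed
  also have "\<dots> = ennreal (real (nat \<lceil>x\<rceil>))" by (simp add: ennreal_of_nat_eq_real_of_nat)
  finally show ?thesis .
qed

lemma K0_from_S2:
  fixes M :: "'a measure" and N :: "real measure" and Z :: "'a \<Rightarrow> real" and \<gamma> :: real
  assumes PM: "prob_space M" and PN: "prob_space N" and sN: "sets N = sets borel" and g: "\<gamma> > 0"
    and iN: "integrable N (\<lambda>x. \<bar>x\<bar> powr (2 + \<gamma>))"
    and iZ: "integrable M Z" and EZ: "integral\<^sup>L M Z = 0"
    and tl: "\<And>x. measure M {\<omega>\<in>space M. x < Z \<omega>} \<le> measure N {x<..}"
  shows "integral\<^sup>L M (\<lambda>\<omega>. \<bar>Z \<omega>\<bar>) \<le> 2 * (integral\<^sup>L N (\<lambda>x. \<bar>x\<bar>) + 1)"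
proof -
  interpret M: prob_space M by (rule PM)
  interpret N: prob_space N by (rule PN)
  have measN: "measurable N = measurable borel" by (rule ext measurable_cong_sets)+ (use sN in auto)
  have Zm[measurable]: "Z \<in> borel_measurable M" using iZ by auto
  have absN: "(\<lambda>x::real. \<bar>x\<bar>) \<in> borel_measurable N" unfolding measN by measurable
  have iabs: "integrable N (\<lambda>x. \<bar>x\<bar>)"
  proof (rule Bochner_Integration.integrable_bound[OF Bochner_Integration.integrable_add[OF iN N.integrable_const[of 1]] absN])
    show "AE x in N. norm \<bar>x\<bar> \<le> norm (\<bar>x\<bar> powr (2 + \<gamma>) + 1)"
    proof (intro AE_I2)
      fix x :: real
      have "\<bar>x\<bar> \<le> \<bar>x\<bar> powr (2 + \<gamma>) + 1"
      proof (cases "\<bar>x\<bar> \<le> 1")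
        case True then show ?thesis by (smt (verit) powr_ge_zero)
      next
        case False
        then have "\<bar>x\<bar> powr 1 \<le> \<bar>x\<bar> powr (2 + \<gamma>)" using g by (intro powr_mono) auto
        then show ?thesis by simp
      qed
      then show "norm \<bar>x\<bar> \<le> norm (\<bar>x\<bar> powr (2 + \<gamma>) + 1)" by simp
    qed
  qed
  have ind_meas: "(\<lambda>x. indicator {real n<..} x :: ennreal) \<in> borel_measurable N" for n
    unfolding measN by measurable
  have "(\<integral>\<^sup>+\<omega>. ennreal (max (Z \<omega>) 0) \<partial>M) \<le> (\<integral>\<^sup>+\<omega>. (\<Sum>n. indicator {real n<..} (Z \<omega>)) \<partial>M)"
  proof (intro nn_integral_mono)
    fix \<omega> assume "\<omega> \<in> space M"
    have "max (Z \<omega>) 0 \<le> real (nat \<lceil>Z \<omega>\<rceil>)" by linarith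
    then show "ennreal (max (Z \<omega>) 0) \<le> (\<Sum>n. indicator {real n<..} (Z \<omega>))"
      unfolding count_ind by (rule ennreal_leI)
  qed
  also have "\<dots> = (\<Sum>n. \<integral>\<^sup>+\<omega>. indicator {real n<..} (Z \<omega>) \<partial>M)"
    by (intro nn_integral_suminf) measurable
  also have "\<dots> = (\<Sum>n. emeasure M {\<omega>\<in>space M. real n < Z \<omega>})"
  proof (intro suminf_cong)
    fix n
    have "(\<integral>\<^sup>+\<omega>. indicator {real n<..} (Z \<omega>) \<partial>M) = (\<integral>\<^sup>+\<omega>. indicator {\<omega>\<in>space M. real n < Z \<omega>} \<omega> \<partial>M)"
      by (intro nn_integral_cong) (auto simp: indicator_def)
    also have "\<dots> = emeasure M {\<omega>\<in>space M. real n < Z \<omega>}" by (intro nn_integral_indicator) measurable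
    finally show "(\<integral>\<^sup>+\<omega>. indicator {real n<..} (Z \<omega>) \<partial>M) = emeasure M {\<omega>\<in>space M. real n < Z \<omega>}" .
  qed
  also have "\<dots> \<le> (\<Sum>n. emeasure N {real n<..})"
  proof (intro suminf_le summableI)
    fix n
    have "{real n<..} \<in> sets N" using sN by simp
    then show "emeasure M {\<omega>\<in>space M. real n < Z \<omega>} \<le> emeasure N {real n<..}"
      using tl[of "real n"] by (simp add: M.emeasure_eq_measure N.emeasure_eq_measure ennreal_leI)
  qed
  also have "\<dots> = (\<Sum>n. \<integral>\<^sup>+x. indicator {real n<..} x \<partial>N)"
  proof (intro suminf_cong)
    fix n
    have "{real n<..} \<in> sets N" using sN by simp
    then show "emeasure N {real n<..} = (\<integral>\<^sup>+x. indicator {real n<..} x \<partial>N)" by simp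
  qed
  also have "\<dots> = (\<integral>\<^sup>+x. (\<Sum>n. indicator {real n<..} x) \<partial>N)"
    by (intro nn_integral_suminf[symmetric] ind_meas)
  also have "\<dots> \<le> (\<integral>\<^sup>+x. ennreal (\<bar>x\<bar> + 1) \<partial>N)"
  proof (intro nn_integral_mono)
    fix x :: real
    have "real (nat \<lceil>x\<rceil>) \<le> \<bar>x\<bar> + 1" by linarith
    then show "(\<Sum>n. indicator {real n<..} x) \<le> ennreal (\<bar>x\<bar> + 1)" unfolding count_ind by (rule ennreal_leI)
  qed
  also have "\<dots> = ennreal (integral\<^sup>L N (\<lambda>x. \<bar>x\<bar> + 1))"
    by (intro nn_integral_eq_integral Bochner_Integration.integrable_add iabs N.integrable_const) auto
  also have "integral\<^sup>L N (\<lambda>x. \<bar>x\<bar> + 1) = integral\<^sup>L N (\<lambda>x. \<bar>x\<bar>) + 1"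
    using iabs by (simp add: N.prob_space)
  finally have nnb: "(\<integral>\<^sup>+\<omega>. ennreal (max (Z \<omega>) 0) \<partial>M) \<le> ennreal (integral\<^sup>L N (\<lambda>x. \<bar>x\<bar>) + 1)" .
  have ipos: "integrable M (\<lambda>\<omega>. max (Z \<omega>) 0)"
    by (rule Bochner_Integration.integrable_bound[OF Bochner_Integration.integrable_abs[OF iZ]]) auto
  have ineg: "integrable M (\<lambda>\<omega>. max (- Z \<omega>) 0)"
    by (rule Bochner_Integration.integrable_bound[OF Bochner_Integration.integrable_abs[OF iZ]]) auto
  have Epos: "integral\<^sup>L M (\<lambda>\<omega>. max (Z \<omega>) 0) \<le> integral\<^sup>L N (\<lambda>x. \<bar>x\<bar>) + 1"
  proof -
    have "(\<integral>\<^sup>+\<omega>. ennreal (max (Z \<omega>) 0) \<partial>M) = ennreal (integral\<^sup>L M (\<lambda>\<omega>. max (Z \<omega>) 0))"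
      by (intro nn_integral_eq_integral ipos) auto
    moreover have B0: "integral\<^sup>L N (\<lambda>x. \<bar>x\<bar>) + 1 \<ge> 0" using integral_nonneg_AE[of "\<lambda>x. \<bar>x\<bar>" N] by auto
    ultimately have "ennreal (integral\<^sup>L M (\<lambda>\<omega>. max (Z \<omega>) 0)) \<le> ennreal (integral\<^sup>L N (\<lambda>x. \<bar>x\<bar>) + 1)"
      using nnb by metis
    then show ?thesis using ennreal_le_iff[OF B0] by blast
  qed
  have s1: "(\<lambda>\<omega>. Z \<omega>) = (\<lambda>\<omega>. max (Z \<omega>) 0 - max (- Z \<omega>) 0)" by (auto simp: max_def)
  have s2: "(\<lambda>\<omega>. \<bar>Z \<omega>\<bar>) = (\<lambda>\<omega>. max (Z \<omega>) 0 + max (- Z \<omega>) 0)" by (auto simp: max_def)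
  have "integral\<^sup>L M (\<lambda>\<omega>. max (Z \<omega>) 0) - integral\<^sup>L M (\<lambda>\<omega>. max (- Z \<omega>) 0) = 0"
    using EZ ipos ineg by (subst Bochner_Integration.integral_diff[symmetric]) (auto simp: s1[symmetric])
  moreover have "integral\<^sup>L M (\<lambda>\<omega>. \<bar>Z \<omega>\<bar>) = integral\<^sup>L M (\<lambda>\<omega>. max (Z \<omega>) 0) + integral\<^sup>L M (\<lambda>\<omega>. max (- Z \<omega>) 0)"
    unfolding s2 using ipos ineg by simp
  ultimately have "integral\<^sup>L M (\<lambda>\<omega>. \<bar>Z \<omega>\<bar>) = 2 * integral\<^sup>L M (\<lambda>\<omega>. max (Z \<omega>) 0)" by simp
  then show ?thesis using Epos by simp
qed



theorem theorem2p3: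
  fixes M :: "'a measure"
    and X :: "nat \<Rightarrow> real \<Rightarrow> 'a \<Rightarrow> real"
    and ms :: "nat \<Rightarrow> real"
  assumes P: "prob_space M"
    and integ: "\<And>k m. m > 0 \<Longrightarrow> integrable M (X k m)"
    and indep: "prob_space.indep_vars M (\<lambda>_. Pi\<^sub>M {0<..} (\<lambda>_. borel))
                  (\<lambda>k \<omega>. restrict (\<lambda>m. X k m \<omega>) {0<..}) UNIV"
    and C: "\<And>k m. m > 0 \<Longrightarrow> integral\<^sup>L M (X k m) = 0"
    and S1: "\<exists>\<delta>>0. \<forall>\<epsilon>>0. \<exists>Cc. \<forall>m>0.
               (SUP k. measure M {\<omega>\<in>space M. \<bar>X k m \<omega>\<bar> > \<epsilon>}) < Cc / m powr \<delta>"
    and S2: "\<exists>N :: real measure. \<exists>\<gamma>>0. prob_space N \<and> sets N = sets borel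
               \<and> integrable N (\<lambda>x. \<bar>x\<bar> powr (2 + \<gamma>))
               \<and> (\<forall>x. (SUP km\<in>UNIV \<times> {0<..}. measure M {\<omega>\<in>space M. X (fst km) (snd km) \<omega> > x})
                        \<le> measure N {x<..})"
    and S3meas: "\<And>k r m c. r > 0 \<Longrightarrow> m > 0 \<Longrightarrow>
               {\<omega>\<in>space M. (SUP s\<in>{0..m}. ereal \<bar>(r+s) * X k (r+s) \<omega> - r * X k r \<omega>\<bar>) \<ge> ereal c}
                 \<in> sets M"
    and S3: "\<forall>\<epsilon>>0. \<exists>\<beta>>1. \<exists>Ce>0. \<forall>t>0. \<forall>r>0. \<forall>m>0.
               (SUP k. measure M {\<omega>\<in>space M.
                   (SUP s\<in>{0..m}. ereal \<bar>(r+s) * X k (r+s) \<omega> - r * X k r \<omega>\<bar>) \<ge> ereal (t * \<epsilon>)})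
                 \<le> Ce * m powr \<beta> / t powr \<beta>"
    and mpos: "\<And>k. k \<ge> 1 \<Longrightarrow> ms k > 0"
    and mdiv: "filterlim (Mpart ms) at_top sequentially"
  shows "AE \<omega> in M. ((\<lambda>t. St X ms t \<omega>) \<longlongrightarrow> 0) at_top"
proof -
  interpret P: prob_space M by (rule P)
  have bddM: "bdd_above (f ` A)" if "\<And>a. f a = measure M (B a)" for f :: "'b \<Rightarrow> real" and A B
    using that by (intro bdd_aboveI[of _ 1]) (auto intro: P.prob_le_1)
  obtain \<delta> where \<delta>: "\<delta> > 0" and S1': "\<And>\<epsilon>. \<epsilon> > 0 \<Longrightarrow> \<exists>Cc. \<forall>m>0.
      (SUP k. measure M {\<omega>\<in>space M. \<bar>X k m \<omega>\<bar> > \<epsilon>}) < Cc / m powr \<delta>"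
    using S1 by blast
  obtain N :: "real measure" and \<gamma> where \<gamma>: "\<gamma> > 0" and PN: "prob_space N" and sN: "sets N = sets borel"
    and iN: "integrable N (\<lambda>x. \<bar>x\<bar> powr (2 + \<gamma>))"
    and tN: "\<And>x. (SUP km\<in>UNIV \<times> {0<..}. measure M {\<omega>\<in>space M. X (fst km) (snd km) \<omega> > x}) \<le> measure N {x<..}"
    using S2 by blast
  obtain \<beta>0 Ce where b0: "\<beta>0 > 1" and Ce: "Ce > 0" and S3': "\<And>t r m. t > 0 \<Longrightarrow> r > 0 \<Longrightarrow> m > 0 \<Longrightarrow>
      (SUP k. measure M {\<omega>\<in>space M.
                   (SUP s\<in>{0..m}. ereal \<bar>(r+s) * X k (r+s) \<omega> - r * X k r \<omega>\<bar>) \<ge> ereal (t * 1)})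
                 \<le> Ce * m powr \<beta>0 / t powr \<beta>0"
    using S3[rule_format, of 1] by auto
  define \<beta> where "\<beta> = min \<beta>0 (3/2)"
  define C3 where "C3 = max Ce 1"
  define K0 where "K0 = 2 * (integral\<^sup>L N (\<lambda>x. \<bar>x\<bar>) + 1)"
  interpret slln M X ms \<beta> C3 \<delta> K0
  proof
    show "\<And>k m. m > 0 \<Longrightarrow> integrable M (X k m)" by (rule integ)
    show "P.indep_vars (\<lambda>_. Pi\<^sub>M {0<..} (\<lambda>_. borel)) (\<lambda>k \<omega>. restrict (\<lambda>m. X k m \<omega>) {0<..}) UNIV"
      by (rule indep)
    show "\<And>k m. m > 0 \<Longrightarrow> P.expectation (X k m) = 0" by (rule C)
    show "\<delta> > 0" by (rule \<delta>)
    show "\<exists>Cc. \<forall>k m. m > 0 \<longrightarrow> P.prob {\<omega>\<in>space M. \<epsilon> < \<bar>X k m \<omega>\<bar>} \<le> Cc * m powr -\<delta>" if e: "\<epsilon> > 0" for \<epsilon>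
    proof -
      obtain Cc where Cc: "\<And>m. m > 0 \<Longrightarrow> (SUP k. measure M {\<omega>\<in>space M. \<bar>X k m \<omega>\<bar> > \<epsilon>}) < Cc / m powr \<delta>"
        using S1'[OF e] by blast
      show ?thesis
      proof (intro exI[of _ Cc] allI impI)
        fix k and m :: real assume m: "m > 0"
        have "P.prob {\<omega>\<in>space M. \<epsilon> < \<bar>X k m \<omega>\<bar>} \<le> (SUP k. measure M {\<omega>\<in>space M. \<bar>X k m \<omega>\<bar> > \<epsilon>})"
          by (rule cSUP_upper) (auto intro: bddM)
        also have "\<dots> \<le> Cc / m powr \<delta>" using Cc[OF m] by simp
        also have "\<dots> = Cc * m powr -\<delta>" by (simp add: powr_minus divide_inverse)
        finally show "P.prob {\<omega>\<in>space M. \<epsilon> < \<bar>X k m \<omega>\<bar>} \<le> Cc * m powr -\<delta>" .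
      qed
    qed
    show "1 < \<beta>" "\<beta> < 2" unfolding \<beta>_def using b0 by auto
    show "C3 > 0" unfolding C3_def by auto
    show "\<And>k r m c. r>0 \<Longrightarrow> m>0 \<Longrightarrow> {\<omega>\<in>space M. ereal c \<le> Dsup X k r m \<omega>} \<in> P.events"
      unfolding Dsup_def using S3meas by blast
    show "P.prob {\<omega>\<in>space M. ereal t \<le> Dsup X k r m \<omega>} \<le> C3 * (m/t) powr \<beta>"
      if r: "r > 0" and m: "m > 0" and t: "t > 0" for k r m t
    proof -
      have eqs: "{\<omega>\<in>space M. ereal t \<le> Dsup X k r m \<omega>} = {\<omega>\<in>space M.
                   (SUP s\<in>{0..m}. ereal \<bar>(r+s) * X k (r+s) \<omega> - r * X k r \<omega>\<bar>) \<ge> ereal (t * 1)}"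
        by (simp add: Dsup_def)
      have p1: "P.prob {\<omega>\<in>space M. ereal t \<le> Dsup X k r m \<omega>} \<le> Ce * (m/t) powr \<beta>0"
      proof -
        have "P.prob {\<omega>\<in>space M. ereal t \<le> Dsup X k r m \<omega>} \<le> (SUP k. measure M {\<omega>\<in>space M.
                   (SUP s\<in>{0..m}. ereal \<bar>(r+s) * X k (r+s) \<omega> - r * X k r \<omega>\<bar>) \<ge> ereal (t * 1)})"
          unfolding eqs by (rule cSUP_upper) (auto intro: bddM)
        also have "\<dots> \<le> Ce * m powr \<beta>0 / t powr \<beta>0" by (rule S3'[OF t r m])
        also have "\<dots> = Ce * (m/t) powr \<beta>0" using m t by (simp add: powr_divide)
        finally show ?thesis .
      qed
      show ?thesis
      proof (cases "m/t \<le> 1")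
        case True
        have "(m/t) powr \<beta>0 \<le> (m/t) powr \<beta>"
          using True m t unfolding \<beta>_def by (intro powr_mono') auto
        then have "Ce * (m/t) powr \<beta>0 \<le> C3 * (m/t) powr \<beta>"
          using Ce unfolding C3_def by (intro mult_mono) auto
        then show ?thesis using p1 by linarith
      next
        case False
        have "1 \<le> (m/t) powr \<beta>" using False b0 unfolding \<beta>_def by (intro ge_one_powr_ge_zero) auto
        also have "\<dots> \<le> C3 * (m/t) powr \<beta>" unfolding C3_def by (intro mult_le_cancel_right1[THEN iffD2]) auto
        finally show ?thesis using P.prob_le_1 by (meson order_trans)
      qed
    qed
    show "P.expectation (\<lambda>\<omega>. \<bar>X k m \<omega>\<bar>) \<le> K0" if m: "m > 0" for k m
    proof -
      have "measure M {\<omega>\<in>space M. x < X k m \<omega>} \<le> measure N {x<..}" for x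
      proof -
        have "measure M {\<omega>\<in>space M. x < X k m \<omega>} \<le>
            (SUP km\<in>UNIV \<times> {0<..}. measure M {\<omega>\<in>space M. X (fst km) (snd km) \<omega> > x})"
          using m by (intro cSUP_upper2[where x="(k,m)"]) (auto intro: bddM)
        also have "\<dots> \<le> measure N {x<..}" by (rule tN)
        finally show ?thesis .
      qed
      then show ?thesis unfolding K0_def
        using K0_from_S2[OF P PN sN \<gamma> iN integ[OF m] C[OF m]] by simp
    qed
    show "\<And>k. k \<ge> 1 \<Longrightarrow> ms k > 0" by (rule mpos)
    show "filterlim (Mpart ms) at_top sequentially" by (rule mdiv)
  qed
  show ?thesis by (rule main)
qed

end
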